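(* For every $\epsilon>0$ there is $L_0$ such that the following holds. Let $V$ be a distinguished positive vector such that $V/\|V\|$ lies in a loop level set of period $L>L_0$, and write $E(V)=(a,b,c)$. Then $0<b<2+\epsilon$.
   Context: $\mathrm{Sol}$ is $\mathbb{R}^3$ with metric $e^{-2z}dx^2+e^{2z}dy^2+dz^2$ and group law $(x,y,z)*(a,b,c)=(e^za+x,e^{-z}b+y,c+z)$; $E$ is the Riemannian exponential map at the origin (tangent space identified with $\mathbb{R}^3$). Let $\Sigma(x,y,z)=(xz,-yz,-x^2+y^2)$, a vector field tangent to the unit sphere $S^2$, with flow $\Phi_s$. For $V\ne0$ the flowline of $V$ is $s\mapsto\Phi_s(V/\|V\|)$, $s\in[0,\|V\|]$. A vector is positive if all three coordinates are positive. For $c\in(0,1/2)$, the set $\{(x,y,z)\in S^2: x,y>0,\ xy=c\}$ is a loop level set; it is a closed orbit of $\Phi$ and its period (time to go once around) is $L_\alpha=\pi/\mathrm{AGM}(\alpha,\tfrac12\sqrt{1+2\alpha^2})$ with $\alpha=\sqrt c$. A flowline is symmetric if its endpoints have the form $(p,q,w)$ and $(p,q,-w)$. A small symmetric flowline is a symmetric flowline of a vector $W$ with $W/\|W\|$ in a loop level set of period $L$ and $\|W\|<L$. A vector $V$ is distinguished if there is $\lambda\ge1$ such that the flowline of $\lambda V$ is a small symmetric flowline. *)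

theory Defs
  imports "HOL-Analysis.Analysis"
begin

type_synonym vec3 = "real \<times> real \<times> real"

text \<open>Euclidean coordinates; note that norm on real \<times> real \<times> real is the Euclidean norm.\<close>

text \<open>Geodesic equation of Sol with metric exp(-2z)dx^2 + exp(2z)dy^2 + dz^2:
  x'' = 2 x' z',  y'' = -2 y' z',  z'' = - exp(-2z) x'^2 + exp(2z) y'^2.\<close>
definition sol_geo_acc :: "vec3 \<Rightarrow> vec3 \<Rightarrow> vec3" where
  "sol_geo_acc p v = (case p of (x,y,z) \<Rightarrow> case v of (u,w,r) \<Rightarrow>
     (2*u*r, -(2*w*r), -(exp (-(2*z)) * u^2) + exp (2*z) * w^2))"

text \<open>Riemannian exponential map of Sol at the origin: E(V) = gamma(1) for the geodesic
  gamma with gamma(0) = 0, gamma'(0) = V (Sol is complete, so gamma is defined on all of R).\<close>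
definition sol_exp :: "vec3 \<Rightarrow> vec3" where
  "sol_exp V = (THE q. \<exists>\<gamma> \<gamma>'. \<gamma> 0 = 0 \<and> \<gamma>' 0 = V \<and>
      (\<forall>t. (\<gamma> has_vector_derivative \<gamma>' t) (at t) \<and>
           (\<gamma>' has_vector_derivative sol_geo_acc (\<gamma> t) (\<gamma>' t)) (at t)) \<and>
      \<gamma> 1 = q)"

definition Sigma_field :: "vec3 \<Rightarrow> vec3" where
  "Sigma_field p = (case p of (x,y,z) \<Rightarrow> (x*z, -(y*z), -(x^2) + y^2))"

text \<open>Flow Phi_s of Sigma (global, since Sigma preserves the Euclidean norm).\<close>
definition Sigma_flow :: "real \<Rightarrow> vec3 \<Rightarrow> vec3" where
  "Sigma_flow s p = (THE q. \<exists>u. u 0 = p \<and>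
      (\<forall>t. (u has_vector_derivative Sigma_field (u t)) (at t)) \<and> u s = q)"

definition unit_vec :: "vec3 \<Rightarrow> vec3" where
  "unit_vec V = (1 / norm V) *\<^sub>R V"

definition positive_vec :: "vec3 \<Rightarrow> bool" where
  "positive_vec V = (case V of (x,y,z) \<Rightarrow> x > 0 \<and> y > 0 \<and> z > 0)"

definition loop_level_set :: "real \<Rightarrow> vec3 set" where
  "loop_level_set c = {(x,y,z). x^2 + y^2 + z^2 = 1 \<and> x > 0 \<and> y > 0 \<and> x*y = c}"

fun agm_seq :: "real \<Rightarrow> real \<Rightarrow> nat \<Rightarrow> real \<times> real" where
  "agm_seq a b 0 = (a, b)"
| "agm_seq a b (Suc n) = (case agm_seq a b n of (x,y) \<Rightarrow> ((x+y)/2, sqrt (x*y)))"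

definition agm :: "real \<Rightarrow> real \<Rightarrow> real" where
  "agm a b = lim (\<lambda>n. fst (agm_seq a b n))"

definition loop_period :: "real \<Rightarrow> real" where
  "loop_period c = pi / agm (sqrt c) (sqrt (1 + 2 * (sqrt c)^2) / 2)"

definition flow_start :: "vec3 \<Rightarrow> vec3" where
  "flow_start W = unit_vec W"

definition flow_end :: "vec3 \<Rightarrow> vec3" where
  "flow_end W = Sigma_flow (norm W) (unit_vec W)"

definition symmetric_flowline :: "vec3 \<Rightarrow> bool" where
  "symmetric_flowline W \<longleftrightarrow> W \<noteq> 0 \<and>
     fst (flow_start W) = fst (flow_end W) \<and>
     fst (snd (flow_start W)) = fst (snd (flow_end W)) \<and>
     snd (snd (flow_end W)) = - snd (snd (flow_start W))"

definition small_symmetric_flowline :: "vec3 \<Rightarrow> bool" where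
  "small_symmetric_flowline W \<longleftrightarrow> W \<noteq> 0 \<and> symmetric_flowline W \<and>
     (\<exists>c. 0 < c \<and> c < 1/2 \<and> unit_vec W \<in> loop_level_set c \<and> norm W < loop_period c)"

definition distinguished :: "vec3 \<Rightarrow> bool" where
  "distinguished V \<longleftrightarrow> (\<exists>l::real. l \<ge> 1 \<and> small_symmetric_flowline (l *\<^sub>R V))"

end

theory Submission
  imports Defs
begin

definition prim :: "(real \<Rightarrow> real) \<Rightarrow> real \<Rightarrow> real" where
  "prim f x = (if 0 \<le> x then integral {0..x} f else - integral {x..0} f)"

lemma prim_0[simp]: "prim f 0 = 0"
  by (simp add: prim_def)

lemma prim_deriv:
  assumes cont: "continuous_on UNIV f"
  shows "(prim f has_real_derivative f x) (at x)"
proof -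
  define n where "n = \<bar>x\<bar> + 1"
  have n: "-n < x" "x < n" "0 < n" using n_def by auto
  have c: "continuous_on {-n..n} f" using cont continuous_on_subset by blast
  have int: "f integrable_on {-n..n}" using c integrable_continuous_real by blast
  have eq: "prim f y = integral {-n..y} f - integral {-n..0} f" if "y \<in> {-n..n}" for y
  proof (cases "0 \<le> y")
    case True
    have "integral {-n..0} f + integral {0..y} f = integral {-n..y} f"
      by (rule Henstock_Kurzweil_Integration.integral_combine) (use True that n in \<open>auto intro: integrable_on_subinterval[OF int]\<close>)
    then show ?thesis using True by (simp add: prim_def)
  next
    case False
    have "integral {-n..y} f + integral {y..0} f = integral {-n..0} f"
      by (rule Henstock_Kurzweil_Integration.integral_combine) (use False that n in \<open>auto intro: integrable_on_subinterval[OF int]\<close>)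
    then show ?thesis using False by (simp add: prim_def algebra_simps)
  qed
  have "((\<lambda>y. integral {-n..y} f - integral {-n..0} f) has_real_derivative f x) (at x within {-n..n})"
    using integral_has_real_derivative[OF c, of x] n
    by (auto intro!: derivative_eq_intros)
  then have "((\<lambda>y. integral {-n..y} f - integral {-n..0} f) has_real_derivative f x) (at x)"
    using n by (subst (asm) at_within_interior) (auto simp: interior_atLeastAtMost_real)
  then show ?thesis
    by (rule has_field_derivative_transform_within_open[where S="{-n<..<n}"]) (use eq n in auto)
qed

lemma vderiv_fst:
  assumes "(u has_vector_derivative p) (at t)"
  shows "((\<lambda>t. fst (u t)) has_real_derivative fst p) (at t)"
  using has_derivative_fst[OF assms[unfolded has_vector_derivative_def]]
  by (simp add: has_real_derivative_iff_has_vector_derivative has_vector_derivative_def)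

lemma vderiv_snd:
  assumes "(u has_vector_derivative p) (at t)"
  shows "((\<lambda>t. snd (u t)) has_vector_derivative snd p) (at t)"
  using has_derivative_snd[OF assms[unfolded has_vector_derivative_def]]
  by (simp add: has_vector_derivative_def)

lemma vderiv3:
  assumes "(u has_vector_derivative (p,q,r)) (at t)"
  shows "((\<lambda>t. fst (u t)) has_real_derivative p) (at t)"
    "((\<lambda>t. fst (snd (u t))) has_real_derivative q) (at t)"
    "((\<lambda>t. snd (snd (u t))) has_real_derivative r) (at t)"
  using vderiv_fst[OF assms] vderiv_fst[OF vderiv_snd[OF assms]]
    vderiv_snd[OF vderiv_snd[OF assms]]
  by (auto simp: has_real_derivative_iff_has_vector_derivative)

lemma vderiv3_mk:
  assumes "(f has_real_derivative p) (at t)" "(g has_real_derivative q) (at t)"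
    "(h has_real_derivative r) (at t)"
  shows "((\<lambda>t. (f t, g t, h t)) has_vector_derivative (p,q,r)) (at t)"
  using assms
  by (auto simp: has_real_derivative_iff_has_vector_derivative intro!: has_vector_derivative_Pair)


lemma key_ineq:
  fixes x y z a b c m :: real
  assumes "\<bar>a\<bar> \<le> m" "\<bar>b\<bar> \<le> m" "\<bar>c\<bar> \<le> m"
  shows "\<bar>2*(c*(x^2-y^2) + z*(b*y - a*x))\<bar> \<le> 4*m*(x^2+y^2+z^2)"
proof -
  have m0: "0 \<le> m" using assms by auto
  have 1: "\<bar>c*(x^2-y^2)\<bar> \<le> m*(x^2+y^2)"
  proof -
    have "\<bar>c*(x^2-y^2)\<bar> = \<bar>c\<bar>*\<bar>x^2-y^2\<bar>" by (simp add: abs_mult)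
    also have "\<dots> \<le> m*(x^2+y^2)"
      by (rule mult_mono) (use assms m0 in \<open>auto simp: abs_le_iff\<close>)
    finally show ?thesis .
  qed
  have sq: "\<bar>p*q\<bar> \<le> (p^2+q^2)/2" for p q :: real
  proof -
    have "0 \<le> (\<bar>p\<bar> - \<bar>q\<bar>)^2" by simp
    then show ?thesis by (simp add: power2_eq_square algebra_simps abs_mult)
  qed
  note zy = sq[of z y] and zx = sq[of z x]
  have 2: "\<bar>z*(b*y)\<bar> \<le> m*((z^2+y^2)/2)"
  proof -
    have "\<bar>z*(b*y)\<bar> = \<bar>b\<bar>*\<bar>z*y\<bar>" by (simp add: abs_mult)
    also have "\<dots> \<le> m*((z^2+y^2)/2)" by (rule mult_mono) (use assms zy in auto)
    finally show ?thesis .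
  qed
  have 3: "\<bar>z*(a*x)\<bar> \<le> m*((z^2+x^2)/2)"
  proof -
    have "\<bar>z*(a*x)\<bar> = \<bar>a\<bar>*\<bar>z*x\<bar>" by (simp add: abs_mult)
    also have "\<dots> \<le> m*((z^2+x^2)/2)" by (rule mult_mono) (use assms zx in auto)
    finally show ?thesis .
  qed
  have "\<bar>2*(c*(x^2-y^2) + z*(b*y - a*x))\<bar> \<le> 2*(\<bar>c*(x^2-y^2)\<bar> + \<bar>z*(b*y)\<bar> + \<bar>z*(a*x)\<bar>)"
  proof -
    have tri: "\<bar>2*(A + (B - C))\<bar> \<le> 2*(\<bar>A\<bar> + \<bar>B\<bar> + \<bar>C\<bar>)" for A B C :: real
    proof -
      have "\<bar>2*(A + (B - C))\<bar> = 2*\<bar>A + (B - C)\<bar>" by (simp only: abs_mult)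
      then show ?thesis using abs_triangle_ineq[of A "B - C"] abs_triangle_ineq4[of B C] by (smt (verit))
    qed
    have e: "z*(b*y - a*x) = z*(b*y) - z*(a*x)" by (simp add: right_diff_distrib)
    show ?thesis unfolding e by (rule tri)
  qed
  also have "\<dots> \<le> 2*(m*(x^2+y^2) + m*((z^2+y^2)/2) + m*((z^2+x^2)/2))"
    using 1 2 3 by (intro mult_left_mono add_mono) auto
  also have "\<dots> \<le> 4*m*(x^2+y^2+z^2)"
  proof -
    have "0 \<le> m*(x^2+y^2+2*z^2)" using m0 by simp
    moreover have "2*(m*(x^2+y^2) + m*((z^2+y^2)/2) + m*((z^2+x^2)/2)) = 4*m*(x^2+y^2+z^2) - m*(x^2+y^2+2*z^2)"
      by (simp add: field_simps)
    ultimately show ?thesis by linarith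
  qed
  finally show ?thesis .
qed

lemma Sigma_field_eq: "Sigma_field p = (fst p * snd (snd p), -(fst (snd p) * snd (snd p)),
   -(fst p ^2) + fst (snd p) ^2)"
  by (cases p) (simp add: Sigma_field_def)

lemma sigma_comp_derivs:
  assumes "\<And>t. (u has_vector_derivative Sigma_field (u t)) (at t)"
  shows "((\<lambda>t. fst (u t)) has_real_derivative fst (u t) * snd (snd (u t))) (at t)"
    "((\<lambda>t. fst (snd (u t))) has_real_derivative -(fst (snd (u t)) * snd (snd (u t)))) (at t)"
    "((\<lambda>t. snd (snd (u t))) has_real_derivative -(fst (u t)^2) + fst (snd (u t))^2) (at t)"
  using vderiv3[OF assms[of t, unfolded Sigma_field_eq]] by auto

lemma sigma_norm_const:
  assumes "\<And>t. (u has_vector_derivative Sigma_field (u t)) (at t)"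
  shows "fst (u t)^2 + fst (snd (u t))^2 + snd (snd (u t))^2
       = fst (u 0)^2 + fst (snd (u 0))^2 + snd (snd (u 0))^2"
proof -
  let ?N = "\<lambda>t. fst (u t)^2 + fst (snd (u t))^2 + snd (snd (u t))^2"
  have "\<forall>t. (?N has_real_derivative 0) (at t)"
  proof
    fix t
    show "(?N has_real_derivative 0) (at t)"
      using sigma_comp_derivs[OF assms, of t]
      by (auto intro!: derivative_eq_intros simp: algebra_simps power2_eq_square)
  qed
  then show ?thesis using DERIV_isconst_all by blast
qed

lemma sigma_unique:
  assumes u: "\<And>t. (u has_vector_derivative Sigma_field (u t)) (at t)"
    and v: "\<And>t. (v has_vector_derivative Sigma_field (v t)) (at t)"
    and u0: "u 0 = v 0"
  shows "u t = v t"
proof -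
  define a1 where "a1 t = fst (u t)" for t
  define b1 where "b1 t = fst (snd (u t))" for t
  define c1 where "c1 t = snd (snd (u t))" for t
  define a2 where "a2 t = fst (v t)" for t
  define b2 where "b2 t = fst (snd (v t))" for t
  define c2 where "c2 t = snd (snd (v t))" for t
  note du = sigma_comp_derivs[OF u, folded a1_def b1_def c1_def]
  note dv = sigma_comp_derivs[OF v, folded a2_def b2_def c2_def]
  define R where "R = a2 0^2 + b2 0^2 + c2 0^2"
  have NR: "a2 s^2 + b2 s^2 + c2 s^2 = R" for s
    using sigma_norm_const[OF v, of s] unfolding R_def a2_def b2_def c2_def by simp
  define m where "m = 1 + R"
  have bnd: "\<bar>a2 s\<bar> \<le> m" "\<bar>b2 s\<bar> \<le> m" "\<bar>c2 s\<bar> \<le> m" for s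
  proof -
    have *: "\<bar>w\<bar> \<le> 1 + w^2" for w :: real
    proof (cases "\<bar>w\<bar> \<le> 1")
      case True then show ?thesis by (simp add: add_increasing2)
    next
      case False
      then have "\<bar>w\<bar> * 1 \<le> \<bar>w\<bar> * \<bar>w\<bar>" by (intro mult_left_mono) auto
      then show ?thesis by (simp add: power2_eq_square)
    qed
    show "\<bar>a2 s\<bar> \<le> m" "\<bar>b2 s\<bar> \<le> m" "\<bar>c2 s\<bar> \<le> m"
      using *[of "a2 s"] *[of "b2 s"] *[of "c2 s"] NR[of s] unfolding m_def
      by (auto intro: order_trans[OF _ add_left_mono] simp: add.assoc)
  qed
  define g where "g s = (a1 s - a2 s)^2 + (b1 s - b2 s)^2 + (c1 s - c2 s)^2" for s
  define g' where "g' s = 2*(c2 s*((a1 s - a2 s)^2-(b1 s - b2 s)^2)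
     + (c1 s - c2 s)*(b2 s*(b1 s - b2 s) - a2 s*(a1 s - a2 s)))" for s
  have dg: "(g has_real_derivative g' s) (at s)" for s
  proof -
    have "(g has_real_derivative
      2*(a1 s - a2 s)*(a1 s * c1 s - a2 s * c2 s) + 2*(b1 s - b2 s)*(-(b1 s * c1 s) + b2 s * c2 s)
      + 2*(c1 s - c2 s)*((-(a1 s^2) + b1 s^2) - (-(a2 s^2) + b2 s^2))) (at s)"
      unfolding g_def[abs_def] using du[of s] dv[of s]
      by (auto intro!: derivative_eq_intros simp: algebra_simps power2_eq_square)
    moreover have "2*(a1 s - a2 s)*(a1 s * c1 s - a2 s * c2 s) + 2*(b1 s - b2 s)*(-(b1 s * c1 s) + b2 s * c2 s)
      + 2*(c1 s - c2 s)*((-(a1 s^2) + b1 s^2) - (-(a2 s^2) + b2 s^2)) = g' s"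
      unfolding g'_def by (simp add: algebra_simps power2_eq_square)
    ultimately show ?thesis by simp
  qed
  define K where "K = 4*m"
  have gK: "\<bar>g' s\<bar> \<le> K * g s" for s
    unfolding g'_def g_def K_def
    using key_ineq[OF bnd[of s], of "a1 s - a2 s" "b1 s - b2 s" "c1 s - c2 s"]
    by (simp add: algebra_simps)
  have g0: "g 0 = 0" using u0 unfolding g_def a1_def a2_def b1_def b2_def c1_def c2_def by simp
  have gnn: "0 \<le> g s" for s unfolding g_def by simp
  have "g t = 0"
  proof (cases "0 \<le> t")
    case True
    define h where "h s = exp (- K * s) * g s" for s
    have "h t \<le> h 0"
    proof (rule DERIV_nonpos_imp_nonincreasing[OF True])
      fix x
      have "(h has_real_derivative exp (- K * x) * (g' x - K * g x)) (at x)"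
        unfolding h_def[abs_def] using dg[of x]
        by (auto intro!: derivative_eq_intros simp: algebra_simps)
      moreover have "exp (- K * x) * (g' x - K * g x) \<le> 0"
        using gK[of x] by (intro mult_nonneg_nonpos) auto
      ultimately show "\<exists>y. (h has_real_derivative y) (at x) \<and> y \<le> 0" by blast
    qed
    then have "exp (- K * t) * g t \<le> 0" using g0 unfolding h_def by simp
    then show ?thesis using gnn[of t] by (simp add: mult_le_0_iff)
  next
    case False
    define h where "h s = exp (K * s) * g s" for s
    have "h t \<le> h 0"
    proof (rule DERIV_nonneg_imp_nondecreasing[of t 0 h])
      show "t \<le> 0" using False by simp
      fix x
      have "(h has_real_derivative exp (K * x) * (g' x + K * g x)) (at x)"
        unfolding h_def[abs_def] using dg[of x]
        by (auto intro!: derivative_eq_intros simp: algebra_simps)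
      moreover have "exp (K * x) * (g' x + K * g x) \<ge> 0"
        using gK[of x] by (intro mult_nonneg_nonneg) auto
      ultimately show "\<exists>y. (h has_real_derivative y) (at x) \<and> y \<ge> 0" by blast
    qed
    then have "exp (K * t) * g t \<le> 0" using g0 unfolding h_def by simp
    then show ?thesis using gnn[of t] by (simp add: mult_le_0_iff)
  qed
  then have "a1 t = a2 t" "b1 t = b2 t" "c1 t = c2 t"
    unfolding g_def by (simp_all add: add_nonneg_eq_0_iff)
  then show ?thesis unfolding a1_def a2_def b1_def b2_def c1_def c2_def
    by (simp add: prod_eq_iff)
qed


definition Dab :: "real \<Rightarrow> real \<Rightarrow> real \<Rightarrow> real" where
  "Dab a b \<phi> = sqrt (a^2 * (cos \<phi>)^2 + b^2 * (sin \<phi>)^2)"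

lemma Dab_sq_pos:
  fixes a b \<phi> :: real
  assumes "a > 0" "b > 0"
  shows "a^2 * (cos \<phi>)^2 + b^2 * (sin \<phi>)^2 > 0"
proof (cases "cos \<phi> = 0")
  case True
  then have "(sin \<phi>)^2 = 1" using sin_cos_squared_add[of \<phi>] by simp
  then show ?thesis using True assms by simp
next
  case False
  then have "a^2 * (cos \<phi>)^2 > 0" using assms by simp
  then show ?thesis by (simp add: add_pos_nonneg)
qed

lemma Dab_pos: "a > 0 \<Longrightarrow> b > 0 \<Longrightarrow> Dab a b \<phi> > 0"
  unfolding Dab_def using Dab_sq_pos by simp

lemma Dab_sq: "a > 0 \<Longrightarrow> b > 0 \<Longrightarrow> (Dab a b \<phi>)^2 = a^2 * (cos \<phi>)^2 + b^2 * (sin \<phi>)^2"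
  unfolding Dab_def using Dab_sq_pos[of a b \<phi>] by simp

lemma Dab_deriv:
  assumes "a > 0" "b > 0"
  shows "(Dab a b has_real_derivative (sin \<phi> * cos \<phi> * (b^2 - a^2) / Dab a b \<phi>)) (at \<phi>)"
proof -
  have pos: "a^2 * (cos \<phi>)^2 + b^2 * (sin \<phi>)^2 > 0" using Dab_sq_pos[OF assms] .
  have "(Dab a b has_real_derivative
     (a^2 * (2 * cos \<phi> * (- sin \<phi>)) + b^2 * (2 * sin \<phi> * cos \<phi>)) * (inverse (sqrt (a^2 * (cos \<phi>)^2 + b^2 * (sin \<phi>)^2)) / 2)) (at \<phi>)"
    unfolding Dab_def[abs_def] using pos
    by (auto intro!: derivative_eq_intros simp: power2_eq_square)
  moreover have "(a^2 * (2 * cos \<phi> * (- sin \<phi>)) + b^2 * (2 * sin \<phi> * cos \<phi>)) * (inverse (sqrt (a^2 * (cos \<phi>)^2 + b^2 * (sin \<phi>)^2)) / 2)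
     = sin \<phi> * cos \<phi> * (b^2 - a^2) / Dab a b \<phi>"
  proof -
    have "sqrt (a^2 * (cos \<phi>)^2 + b^2 * (sin \<phi>)^2) > 0" using pos by simp
    then show ?thesis unfolding Dab_def by (simp add: field_simps)
  qed
  ultimately show ?thesis by simp
qed

lemma Dab_cont:
  assumes "a > 0" "b > 0" shows "continuous_on UNIV (\<lambda>\<phi>. 1 / Dab a b \<phi>)"
  using Dab_pos[OF assms] unfolding Dab_def
  by (intro continuous_intros) (metis less_irrefl)

definition Fab :: "real \<Rightarrow> real \<Rightarrow> real \<Rightarrow> real" where
  "Fab a b = prim (\<lambda>\<phi>. 1 / Dab a b \<phi>)"

lemma Fab_deriv: "a > 0 \<Longrightarrow> b > 0 \<Longrightarrow> (Fab a b has_real_derivative 1 / Dab a b \<phi>) (at \<phi>)"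
  unfolding Fab_def by (rule prim_deriv[OF Dab_cont])

lemma Fab_0[simp]: "Fab a b 0 = 0" by (simp add: Fab_def)

lemma Dab_reflect: "Dab a b (pi - \<phi>) = Dab a b \<phi>"
  by (simp add: Dab_def)

lemma Dab_shift: "Dab a b (\<phi> + pi) = Dab a b \<phi>"
  by (simp add: Dab_def)

lemma Fab_reflect:
  assumes "a > 0" "b > 0"
  shows "Fab a b (pi - \<phi>) + Fab a b \<phi> = Fab a b pi"
proof -
  have "\<forall>x. ((\<lambda>\<phi>. Fab a b (pi - \<phi>) + Fab a b \<phi>) has_real_derivative 0) (at x)"
  proof
    fix x
    have "((\<lambda>\<phi>. Fab a b (pi - \<phi>) + Fab a b \<phi>) has_real_derivative
       (1 / Dab a b (pi - x)) * (-1) + 1 / Dab a b x) (at x)"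
      by (rule derivative_eq_intros DERIV_chain2[OF Fab_deriv[OF assms]] | simp)+
    then show "((\<lambda>\<phi>. Fab a b (pi - \<phi>) + Fab a b \<phi>) has_real_derivative 0) (at x)"
      by (simp add: Dab_reflect)
  qed
  from DERIV_isconst_all[OF this, of \<phi> 0] show ?thesis by simp
qed

lemma Fab_half: "a > 0 \<Longrightarrow> b > 0 \<Longrightarrow> Fab a b pi = 2 * Fab a b (pi/2)"
  using Fab_reflect[of a b "pi/2"] by simp

lemma Fab_shift:
  assumes "a > 0" "b > 0"
  shows "Fab a b (\<phi> + pi) = Fab a b \<phi> + Fab a b pi"
proof -
  have "\<forall>x. ((\<lambda>\<phi>. Fab a b (\<phi> + pi) - Fab a b \<phi>) has_real_derivative 0) (at x)"
  proof
    fix x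
    have "((\<lambda>\<phi>. Fab a b (\<phi> + pi) - Fab a b \<phi>) has_real_derivative
       (1 / Dab a b (x + pi)) * 1 - 1 / Dab a b x) (at x)"
      by (rule derivative_eq_intros DERIV_chain2[OF Fab_deriv[OF assms]] | simp)+
    then show "((\<lambda>\<phi>. Fab a b (\<phi> + pi) - Fab a b \<phi>) has_real_derivative 0) (at x)"
      by (simp add: Dab_shift)
  qed
  from DERIV_isconst_all[OF this, of \<phi> 0] show ?thesis by simp
qed


lemma cos_2arctan: "cos (2 * arctan t) = (1 - t^2)/(1+t^2)"
proof -
  have p: "1 + t^2 > 0" by (simp add: add_pos_nonneg)
  have "cos (2 * arctan t) = (cos (arctan t))^2 - (sin (arctan t))^2" by (rule cos_double)
  also have "\<dots> = (1 - t^2)/(1+t^2)"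
    using p by (simp add: cos_arctan sin_arctan power_divide diff_divide_distrib)
  finally show ?thesis .
qed

lemma sin_2arctan: "sin (2 * arctan t) = 2*t/(1+t^2)"
proof -
  have p: "1 + t^2 > 0" by (simp add: add_pos_nonneg)
  have "sin (2 * arctan t) = 2 * sin (arctan t) * cos (arctan t)" by (rule sin_double)
  also have "\<dots> = 2*t/(1+t^2)"
    using p by (simp add: cos_arctan sin_arctan field_simps power2_eq_square[symmetric])
  finally show ?thesis .
qed

lemma landen_alg1:
  fixes a b c s d :: real
  assumes "d > 0" "d^2 = a^2*c^2 + b^2* s^2" "d + a*c > 0"
  shows "(1 - (b * s/(d + a*c))^2)/(1+(b * s/(d + a*c))^2) = a*c/d"
    "2*(b * s/(d + a*c))/(1+(b * s/(d + a*c))^2) = b * s/d"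
    "1+(b * s/(d + a*c))^2 = 2*d/(d+a*c)"
proof -
  define Q where "Q = d + a*c"
  have Q: "Q > 0" using assms Q_def by simp
  have t2: "(b * s/Q)^2 = (b * s)^2/Q^2" by (simp add: power_divide)
  have bs: "(b * s)^2 = 2*d*Q - Q^2" using assms(2) unfolding Q_def by algebra
  have r: "(2*d*Q - Q^2)/Q^2 = 2*d/Q - 1" using Q by (simp add: field_simps power2_eq_square)
  have e: "1+(b * s/Q)^2 = 2*d/Q" unfolding t2 bs r by simp
  have e2: "1-(b * s/Q)^2 = 2*(a*c)/Q" unfolding t2 bs r using Q by (simp add: field_simps Q_def)
  show "1+(b * s/(d + a*c))^2 = 2*d/(d+a*c)" using e Q_def by simp
  show "(1 - (b * s/(d + a*c))^2)/(1+(b * s/(d + a*c))^2) = a*c/d"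
    unfolding Q_def[symmetric] e e2 using Q assms(1) by (simp add: field_simps)
  show "2*(b * s/(d + a*c))/(1+(b * s/(d + a*c))^2) = b * s/d"
    unfolding Q_def[symmetric] e using Q assms(1) by (simp add: field_simps)
qed

lemma landen_alg2:
  fixes a b c s d :: real
  assumes "d > 0" "d^2 = a^2*c^2 + b^2* s^2" "c^2 + s^2 = 1" "d + a*c > 0"
  shows "(b * c * (d + a*c) - b * s * (s * c * (b^2 - a^2) / d - a * s)) / ((d + a*c) * (d + a*c))
      = (a*b/d)/(d + a*c)"
proof -
  define Q where "Q = d + a*c"
  have Q: "Q > 0" using assms Q_def by simp
  define X' where "X' = b * c * Q * d - b * s * (s * c * (b^2 - a^2)) + a * b * s^2 * d"
  have "b * c * Q - b * s * (s * c * (b^2 - a^2) / d - a * s) = X' / d"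
    unfolding X'_def using assms(1) by (simp add: field_simps power2_eq_square)
  moreover have "X' = a * b * Q" unfolding X'_def Q_def using assms(2,3) by algebra
  ultimately have "b * c * Q - b * s * (s * c * (b^2 - a^2) / d - a * s) = a * b * Q / d" by simp
  then show ?thesis unfolding Q_def[symmetric] using Q assms(1) by (simp add: field_simps)
qed

lemma landen_alg3:
  fixes a b c s d :: real
  assumes "d > 0"
  shows "((a+b)/2)^2 * ((a*c^2 - b * s^2)/d)^2 + (a*b) * ((a+b)* s*c/d)^2
       = ((a+b)*(a*c^2+b * s^2)/(2*d))^2"
proof -
  have "(a+b)^2 * (a*c^2 - b * s^2)^2 + 4*(a*b) * ((a+b)* s*c)^2 = ((a+b)*(a*c^2+b * s^2))^2"
    by (simp add: power2_eq_square algebra_simps)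
  then have "((a+b)/2)^2 * (a*c^2 - b * s^2)^2 + (a*b) * ((a+b)* s*c)^2 = ((a+b)*(a*c^2+b * s^2)/2)^2"
    by (simp add: power_divide field_simps)
  then show ?thesis using assms by (simp add: power_divide field_simps)
qed


lemma landen:
  assumes a: "a > 0" and b: "b > 0"
  shows "Fab ((a+b)/2) (sqrt (a*b)) (pi/2) = Fab a b (pi/2)"
proof -
  define a1 where "a1 = (a+b)/2"
  define b1 where "b1 = sqrt (a*b)"
  have a1: "a1 > 0" and b1: "b1 > 0" using a b by (auto simp: a1_def b1_def)
  have b1sq: "b1^2 = a*b" using a b by (simp add: b1_def)
  define D where "D x = Dab a b x" for x
  define tt where "tt x = b * sin x / (D x + a * cos x)" for x
  define h where "h x = x + 2 * arctan (tt x)" for x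
  have Dpos: "D x > 0" for x using Dab_pos[OF a b] D_def by simp
  have Dsq: "(D x)^2 = a^2 * (cos x)^2 + b^2 * (sin x)^2" for x using Dab_sq[OF a b] D_def by simp
  have cs: "(cos x)^2 + (sin x)^2 = 1" for x :: real by (rule sin_cos_squared_add2)
  have Qpos: "D x + a * cos x > 0" if "0 \<le> cos x" for x
    using Dpos[of x] that a by (simp add: add_pos_nonneg)
  have dtt: "(tt has_real_derivative (a*b/D x)/(D x + a * cos x)) (at x)" if "0 \<le> cos x" for x
  proof -
    have dD: "(D has_real_derivative (sin x * cos x * (b^2 - a^2) / D x)) (at x)"
      unfolding D_def[abs_def] using Dab_deriv[OF a b] by simp
    have "(tt has_real_derivative
        (b * cos x * (D x + a * cos x) - b * sin x * (sin x * cos x * (b^2 - a^2) / D x - a * sin x))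
          / ((D x + a * cos x) * (D x + a * cos x))) (at x)"
      unfolding tt_def[abs_def]
      by (rule DERIV_divide) (use dD Qpos[OF that] in \<open>auto intro!: derivative_eq_intros\<close>)
    moreover have "(b * cos x * (D x + a * cos x) - b * sin x * (sin x * cos x * (b^2 - a^2) / D x - a * sin x))
          / ((D x + a * cos x) * (D x + a * cos x)) = (a*b/D x)/(D x + a * cos x)"
      using landen_alg2[OF Dpos[of x] Dsq[of x] cs[of x] Qpos[OF that]] by (simp add: mult.assoc)
    ultimately show ?thesis by simp
  qed
  have tt1: "1 + (tt x)^2 = 2 * D x / (D x + a * cos x)" if "0 \<le> cos x" for x
    using landen_alg1(3)[OF Dpos[of x] Dsq[of x] Qpos[OF that]] unfolding tt_def by simp
  have dh: "(h has_real_derivative 1 + a*b/(D x)^2) (at x)" if "0 \<le> cos x" for x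
  proof -
    have "(h has_real_derivative 1 + 2 * (inverse (1 + (tt x)^2) * ((a*b/D x)/(D x + a * cos x)))) (at x)"
      unfolding h_def[abs_def]
      by (rule derivative_eq_intros DERIV_chain2[OF DERIV_arctan] dtt[OF that] | simp)+
    moreover have "2 * (inverse (1 + (tt x)^2) * ((a*b/D x)/(D x + a * cos x))) = a*b/(D x)^2"
    proof -
      have gen: "2 * (inverse (2 * d / Q) * ((a*b/d)/Q)) = a*b/d^2" if "d > 0" "Q > 0" for d Q :: real
        using that by (simp add: field_simps power2_eq_square)
      show ?thesis unfolding tt1[OF that] using gen[OF Dpos[of x] Qpos[OF that]] .
    qed
    ultimately show ?thesis by simp
  qed
  have cosh: "cos (h x) = (a * (cos x)^2 - b * (sin x)^2) / D x" if "0 \<le> cos x" for x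
  proof -
    have "cos (h x) = cos x * cos (2 * arctan (tt x)) - sin x * sin (2 * arctan (tt x))"
      unfolding h_def by (rule cos_add)
    also have "\<dots> = cos x * (a * cos x / D x) - sin x * (b * sin x / D x)"
      unfolding cos_2arctan sin_2arctan tt_def
      using landen_alg1(1,2)[OF Dpos[of x] Dsq[of x] Qpos[OF that]] by simp
    finally show ?thesis using Dpos[of x] by (simp add: diff_divide_distrib power2_eq_square mult_ac)
  qed
  have sinh: "sin (h x) = (a + b) * sin x * cos x / D x" if "0 \<le> cos x" for x
  proof -
    have "sin (h x) = sin x * cos (2 * arctan (tt x)) + cos x * sin (2 * arctan (tt x))"
      unfolding h_def by (rule sin_add)
    also have "\<dots> = sin x * (a * cos x / D x) + cos x * (b * sin x / D x)"
      unfolding cos_2arctan sin_2arctan tt_def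
      using landen_alg1(1,2)[OF Dpos[of x] Dsq[of x] Qpos[OF that]] by simp
    finally show ?thesis using Dpos[of x] by (simp add: add_divide_distrib[symmetric] algebra_simps)
  qed
  have D1h: "Dab a1 b1 (h x) = (a+b) * (a * (cos x)^2 + b * (sin x)^2) / (2 * D x)" if "0 \<le> cos x" for x
  proof -
    have "(Dab a1 b1 (h x))^2 = ((a+b) * (a * (cos x)^2 + b * (sin x)^2) / (2 * D x))^2"
      unfolding Dab_sq[OF a1 b1] cosh[OF that] sinh[OF that] b1sq unfolding a1_def
      using landen_alg3[OF Dpos[of x], of a b "cos x" "sin x"] by (simp add: mult.assoc)
    moreover have "(a+b) * (a * (cos x)^2 + b * (sin x)^2) / (2 * D x) \<ge> 0"
      using a b Dpos[of x] by simp
    moreover have "Dab a1 b1 (h x) \<ge> 0" using Dab_pos[OF a1 b1] less_imp_le by blast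
    ultimately show ?thesis using power2_eq_iff_nonneg by blast
  qed
  have key: "(a+b) * (a * (cos x)^2 + b * (sin x)^2) = (D x)^2 + a*b" for x
    using Dsq[of x] cs[of x] by algebra
  define G where "G x = Fab a1 b1 (h x) - 2 * Fab a b x" for x
  have dG: "(G has_real_derivative 0) (at x)" if "0 \<le> cos x" for x
  proof -
    have "(G has_real_derivative (1 / Dab a1 b1 (h x)) * (1 + a*b/(D x)^2) - 2 * (1 / D x)) (at x)"
      unfolding G_def[abs_def]
      by (rule derivative_eq_intros DERIV_chain2[OF Fab_deriv[OF a1 b1]] dh[OF that]
           Fab_deriv[OF a b] | simp add: D_def)+
    moreover have "(1 / Dab a1 b1 (h x)) * (1 + a*b/(D x)^2) - 2 * (1 / D x) = 0"
    proof -
      have gen: "(1 / ((d^2 + p) / (2 * d))) * (1 + p/d^2) - 2 * (1 / d) = 0" if "d > 0" "p > 0" for d p :: real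
      proof -
        have q: "d^2 + p > 0" using that by (simp add: add_pos_pos)
        have "1 + p/d^2 = (d^2 + p)/d^2" using that by (simp add: field_simps)
        then have "(1 / ((d^2 + p) / (2 * d))) * (1 + p/d^2) = (2 * d / (d^2+p)) * ((d^2 + p)/d^2)" by simp
        also have "\<dots> = 2 * d / d^2" using q by simp
        also have "\<dots> = 2 * (1/d)" using that by (simp add: power2_eq_square)
        finally show ?thesis by simp
      qed
      show ?thesis unfolding D1h[OF that] key using gen[OF Dpos[of x], of "a*b"] a b by simp
    qed
    ultimately show ?thesis by simp
  qed
  have cos_nn: "0 \<le> cos x" if "0 \<le> x" "x \<le> pi/2" for x
    using that by (intro cos_ge_zero) auto
  have "G (pi/2) = G 0"
  proof (rule DERIV_isconst_end[of 0 "pi/2" G])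
    show "0 < pi/2" by simp
    show "continuous_on {0..pi/2} G"
      by (rule DERIV_continuous_on[where D="\<lambda>_. 0"]) (use dG cos_nn in \<open>auto intro: has_field_derivative_at_within\<close>)
    show "\<And>x. 0 < x \<Longrightarrow> x < pi / 2 \<Longrightarrow> (G has_real_derivative 0) (at x)"
      using dG cos_nn by auto
  qed
  moreover have "h 0 = 0" unfolding h_def tt_def by simp
  moreover have "h (pi/2) = pi"
  proof -
    have "D (pi/2) = b" unfolding D_def Dab_def using b by simp
    then have "tt (pi/2) = 1" unfolding tt_def using b by simp
    then show ?thesis unfolding h_def by (simp add: arctan_one)
  qed
  ultimately have "Fab a1 b1 pi = 2 * Fab a b (pi/2)" unfolding G_def by simp
  then show ?thesis using Fab_half[OF a1 b1] unfolding a1_def b1_def by simp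
qed


lemma agm_seq_Suc_fst: "fst (agm_seq a b (Suc n)) = (fst (agm_seq a b n) + snd (agm_seq a b n))/2"
  by (simp split: prod.split)

lemma agm_seq_Suc_snd: "snd (agm_seq a b (Suc n)) = sqrt (fst (agm_seq a b n) * snd (agm_seq a b n))"
  by (simp split: prod.split)

lemma agm_seq_pos:
  assumes "a > 0" "b > 0"
  shows "fst (agm_seq a b n) > 0 \<and> snd (agm_seq a b n) > 0"
proof (induction n)
  case 0 then show ?case using assms by simp
next
  case (Suc n)
  then show ?case unfolding agm_seq_Suc_fst agm_seq_Suc_snd by simp
qed

lemma amgm: "x \<ge> 0 \<Longrightarrow> y \<ge> 0 \<Longrightarrow> sqrt (x*y) \<le> (x+y)/(2::real)"
proof -
  assume xy: "x \<ge> 0" "y \<ge> 0"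
  have "0 \<le> (sqrt x - sqrt y)^2" by simp
  then have "2 * (sqrt x * sqrt y) \<le> (sqrt x)^2 + (sqrt y)^2" by (simp add: power2_diff)
  then show ?thesis using xy by (simp add: real_sqrt_mult)
qed

lemma agm_seq_ord:
  assumes "a > 0" "b > 0"
  shows "snd (agm_seq a b (Suc n)) \<le> fst (agm_seq a b (Suc n))"
  unfolding agm_seq_Suc_fst agm_seq_Suc_snd
  using agm_seq_pos[OF assms, of n] by (intro amgm) auto

lemma agm_seq_dec:
  assumes "a > 0" "b > 0"
  shows "fst (agm_seq a b (Suc (Suc n))) \<le> fst (agm_seq a b (Suc n))"
  using agm_seq_ord[OF assms, of n] unfolding agm_seq_Suc_fst[of a b "Suc n"] by simp

lemma agm_lim:
  assumes "a > 0" "b > 0"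
  shows "(\<lambda>n. fst (agm_seq a b n)) \<longlonglongrightarrow> agm a b"
proof -
  define X where "X n = fst (agm_seq a b (Suc n))" for n
  have "decseq X" unfolding X_def by (rule decseq_SucI) (rule agm_seq_dec[OF assms])
  moreover have "\<forall>i. 0 \<le> X i" unfolding X_def using agm_seq_pos[OF assms] less_imp_le by blast
  ultimately obtain L where L: "X \<longlonglongrightarrow> L" by (rule decseq_convergent)
  then have "(\<lambda>n. fst (agm_seq a b n)) \<longlonglongrightarrow> L"
    unfolding X_def using filterlim_sequentially_Suc[of "\<lambda>n. fst (agm_seq a b n)"] by simp
  moreover from this have "agm a b = L" unfolding agm_def by (rule limI)
  ultimately show ?thesis by simp
qed

lemma Fab_lower:
  assumes "a \<ge> b" "b > 0"
  shows "Fab a b (pi/2) \<ge> (pi/2)/a"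
proof -
  have a: "a > 0" using assms by simp
  define H where "H x = Fab a b x - x/a" for x
  have "H 0 \<le> H (pi/2)"
  proof (rule DERIV_nonneg_imp_nondecreasing[of 0 "pi/2" H])
    show "0 \<le> pi/2" by simp
    fix x
    have "(H has_real_derivative 1 / Dab a b x - 1/a) (at x)"
      unfolding H_def[abs_def] using Fab_deriv[OF a assms(2)] a
      by (auto intro!: derivative_eq_intros)
    moreover have "Dab a b x \<le> a"
    proof -
      have "(Dab a b x)^2 \<le> a^2"
      proof -
        have "(Dab a b x)^2 = a^2 * (cos x)^2 + b^2 * (sin x)^2" by (rule Dab_sq[OF a assms(2)])
        also have "\<dots> \<le> a^2 * (cos x)^2 + a^2 * (sin x)^2"
          using assms by (intro add_left_mono mult_right_mono power_mono) auto
        also have "\<dots> = a^2" by (simp add: distrib_left[symmetric])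
        finally show ?thesis .
      qed
      then show ?thesis using a by (simp add: abs_le_square_iff[symmetric] power2_le_iff_abs_le)
    qed
    then have "1 / Dab a b x - 1/a \<ge> 0" using Dab_pos[OF a assms(2), of x]
      by (simp add: frac_le)
    ultimately show "\<exists>y. (H has_real_derivative y) (at x) \<and> y \<ge> 0" by blast
  qed
  then show ?thesis unfolding H_def by simp
qed

lemma landen_iter:
  assumes "\<alpha> > 0" "\<beta> > 0" "n \<ge> 1"
  shows "Fab (2*\<beta>) (2*\<alpha>) (pi/2) =
    Fab (2*fst (agm_seq \<alpha> \<beta> n)) (2* snd (agm_seq \<alpha> \<beta> n)) (pi/2)"
  using assms(3)
proof (induction n rule: dec_induct)
  case base
  have "Fab ((2*\<beta> + 2*\<alpha>)/2) (sqrt (2*\<beta>*(2*\<alpha>))) (pi/2) = Fab (2*\<beta>) (2*\<alpha>) (pi/2)"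
    by (rule landen) (use assms in auto)
  moreover have "sqrt (2*\<beta>*(2*\<alpha>)) = 2 * sqrt (\<alpha>*\<beta>)"
    by (simp add: real_sqrt_mult mult_ac)
  ultimately show ?case by (simp add: algebra_simps)
next
  case (step m)
  define x where "x = fst (agm_seq \<alpha> \<beta> m)"
  define y where "y = snd (agm_seq \<alpha> \<beta> m)"
  have xy: "x > 0" "y > 0" using agm_seq_pos[OF assms(1,2), of m] x_def y_def by auto
  have "Fab ((2*x + 2*y)/2) (sqrt (2*x*(2*y))) (pi/2) = Fab (2*x) (2*y) (pi/2)"
    by (rule landen) (use xy in auto)
  moreover have "sqrt (2*x*(2*y)) = 2 * sqrt (x*y)"
    by (simp add: real_sqrt_mult mult_ac)
  ultimately show ?case using step.IH unfolding agm_seq_Suc_fst agm_seq_Suc_snd x_def[symmetric] y_def[symmetric]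
    by (simp add: algebra_simps)
qed

lemma period_ge_agm:
  assumes "\<alpha> > 0" "\<beta> > 0"
  shows "pi / agm \<alpha> \<beta> \<le> 4 * Fab (2*\<beta>) (2*\<alpha>) (pi/2)"
proof -
  define P where "P = 4 * Fab (2*\<beta>) (2*\<alpha>) (pi/2)"
  have bound: "pi / fst (agm_seq \<alpha> \<beta> n) \<le> P" if "n \<ge> 1" for n
  proof -
    define x where "x = fst (agm_seq \<alpha> \<beta> n)"
    define y where "y = snd (agm_seq \<alpha> \<beta> n)"
    have xy: "x > 0" "y > 0" using agm_seq_pos[OF assms, of n] x_def y_def by auto
    have "y \<le> x" using agm_seq_ord[OF assms, of "n - 1"] that x_def y_def by simp
    then have "Fab (2*x) (2*y) (pi/2) \<ge> (pi/2)/(2*x)" using xy by (intro Fab_lower) auto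
    then have "P \<ge> 4 * ((pi/2)/(2*x))"
      unfolding P_def landen_iter[OF assms that] x_def[symmetric] y_def[symmetric] by simp
    then show ?thesis unfolding x_def[symmetric] by simp
  qed
  have Ppos: "P > 0"
  proof -
    have "pi / fst (agm_seq \<alpha> \<beta> 1) > 0" using agm_seq_pos[OF assms, of 1] by simp
    then show ?thesis using bound[of 1] by linarith
  qed
  have "pi / P \<le> fst (agm_seq \<alpha> \<beta> n)" if "n \<ge> 1" for n
    using bound[OF that] Ppos agm_seq_pos[OF assms, of n] by (simp add: field_simps)
  then have "pi / P \<le> agm \<alpha> \<beta>"
    by (intro LIMSEQ_le_const[OF agm_lim[OF assms]]) auto
  then have L: "agm \<alpha> \<beta> > 0" "pi \<le> agm \<alpha> \<beta> * P" using Ppos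
    by (auto simp: pos_divide_le_eq intro: less_le_trans[OF divide_pos_pos[OF pi_gt_zero Ppos]])
  then show ?thesis unfolding P_def[symmetric] by (simp add: pos_divide_le_eq mult.commute)
qed


lemma Fab_strict_mono:
  assumes "a > 0" "b > 0" "x < y"
  shows "Fab a b x < Fab a b y"
proof (rule DERIV_pos_imp_increasing[OF assms(3)])
  fix z
  show "\<exists>y. (Fab a b has_real_derivative y) (at z) \<and> 0 < y"
    by (intro exI[of _ "1 / Dab a b z"] conjI Fab_deriv[OF assms(1,2)])
       (simp add: Dab_pos[OF assms(1,2)])
qed

lemma Fab_mono_iff:
  assumes "a > 0" "b > 0"
  shows "Fab a b x < Fab a b y \<longleftrightarrow> x < y" "Fab a b x \<le> Fab a b y \<longleftrightarrow> x \<le> y"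
    "Fab a b x = Fab a b y \<longleftrightarrow> x = y"
  using Fab_strict_mono[OF assms, of x y] Fab_strict_mono[OF assms, of y x]
  by (cases x y rule: linorder_cases; auto)+

lemma Dab_le:
  assumes "a > 0" "b > 0"
  shows "Dab a b x \<le> a + b"
proof -
  have "(Dab a b x)^2 \<le> (a+b)^2"
  proof -
    have "(Dab a b x)^2 = a^2 * (cos x)^2 + b^2 * (sin x)^2" by (rule Dab_sq[OF assms])
    also have "\<dots> \<le> a^2 * 1 + b^2 * 1"
    proof -
      have "(cos x)^2 \<le> 1" "(sin x)^2 \<le> 1"
        using sin_cos_squared_add[of x] zero_le_power2[of "sin x"] zero_le_power2[of "cos x"] by linarith+
      then show ?thesis by (intro add_mono mult_left_mono) auto
    qed
    also have "\<dots> \<le> (a+b)^2" using assms by (simp add: power2_sum)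
    finally show ?thesis .
  qed
  then show ?thesis using assms by (simp add: power2_le_iff_abs_le)
qed

lemma Fab_lin:
  assumes "a > 0" "b > 0"
  shows "x \<ge> 0 \<Longrightarrow> Fab a b x \<ge> x/(a+b)" "x \<le> 0 \<Longrightarrow> Fab a b x \<le> x/(a+b)"
proof -
  define H where "H x = Fab a b x - x/(a+b)" for x
  have d: "\<exists>y. (H has_real_derivative y) (at x) \<and> y \<ge> 0" for x
  proof -
    have "(H has_real_derivative 1 / Dab a b x - 1/(a+b)) (at x)"
      unfolding H_def[abs_def] using Fab_deriv[OF assms] assms
      by (auto intro!: derivative_eq_intros)
    moreover have "1 / Dab a b x - 1/(a+b) \<ge> 0"
      using Dab_le[OF assms, of x] Dab_pos[OF assms, of x] by (simp add: frac_le)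
    ultimately show ?thesis by blast
  qed
  show "x \<ge> 0 \<Longrightarrow> Fab a b x \<ge> x/(a+b)"
    using DERIV_nonneg_imp_nondecreasing[of 0 x H] d unfolding H_def by auto
  show "x \<le> 0 \<Longrightarrow> Fab a b x \<le> x/(a+b)"
    using DERIV_nonneg_imp_nondecreasing[of x 0 H] d unfolding H_def by auto
qed

lemma Fab_surj:
  assumes "a > 0" "b > 0"
  shows "\<exists>x. Fab a b x = t"
proof -
  define M where "M = (a+b) * (\<bar>t\<bar> + 1)"
  have M: "M \<ge> 0" using assms M_def by simp
  have "Fab a b (-M) \<le> -M/(a+b)" using Fab_lin(2)[OF assms, of "-M"] M by simp
  also have "-M/(a+b) \<le> t" using assms unfolding M_def by simp
  finally have lo: "Fab a b (-M) \<le> t" .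
  have "t \<le> M/(a+b)" using assms unfolding M_def by simp
  also have "\<dots> \<le> Fab a b M" using Fab_lin(1)[OF assms, of M] M by simp
  finally have hi: "t \<le> Fab a b M" .
  have cont: "\<forall>x. -M \<le> x \<and> x \<le> M \<longrightarrow> isCont (Fab a b) x"
    using Fab_deriv[OF assms] DERIV_isCont by blast
  show ?thesis using IVT[OF lo hi _ cont] M by auto
qed

definition Gab :: "real \<Rightarrow> real \<Rightarrow> real \<Rightarrow> real" where
  "Gab a b t = (THE x. Fab a b x = t)"

lemma Fab_Gab:
  assumes "a > 0" "b > 0"
  shows "Fab a b (Gab a b t) = t"
proof -
  obtain x where x: "Fab a b x = t" using Fab_surj[OF assms] by blast
  have "Gab a b t = x" unfolding Gab_def
    by (rule the_equality) (use x Fab_mono_iff(3)[OF assms] in auto)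
  then show ?thesis using x by simp
qed

lemma Gab_Fab:
  assumes "a > 0" "b > 0"
  shows "Gab a b (Fab a b x) = x"
  using Fab_Gab[OF assms, of "Fab a b x"] Fab_mono_iff(3)[OF assms] by blast

lemma Gab_mono_iff:
  assumes "a > 0" "b > 0"
  shows "Gab a b s < Gab a b t \<longleftrightarrow> s < t" "Gab a b s \<le> Gab a b t \<longleftrightarrow> s \<le> t"
  using Fab_mono_iff(1,2)[OF assms, of "Gab a b s" "Gab a b t"] Fab_Gab[OF assms] by auto

lemma Gab_deriv:
  assumes "a > 0" "b > 0"
  shows "(Gab a b has_real_derivative Dab a b (Gab a b t)) (at t)"
proof -
  have cont: "isCont (Gab a b) t"
  proof -
    have "isCont (Gab a b) (Fab a b (Gab a b t))"
      by (rule isCont_inverse_function[where d=1 and f="Fab a b" and g="Gab a b" and x="Gab a b t"])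
         (use Gab_Fab[OF assms] DERIV_isCont[OF Fab_deriv[OF assms]] in auto)
    then show ?thesis using Fab_Gab[OF assms] by simp
  qed
  have "(Gab a b has_real_derivative inverse (1 / Dab a b (Gab a b t))) (at t)"
    by (rule DERIV_inverse_function[where a="t - 1" and b="t + 1" and f="Fab a b"])
       (use Fab_deriv[OF assms] Dab_pos[OF assms] Fab_Gab[OF assms] cont in \<open>auto simp: less_imp_neq[symmetric]\<close>)
  then show ?thesis by simp
qed


definition pA :: "real \<Rightarrow> real" where "pA k = sqrt (1 + 2*k)"
definition pB :: "real \<Rightarrow> real" where "pB k = 2 * sqrt k"
definition cm :: "real \<Rightarrow> real" where "cm k = sqrt (1 - 2*k)"

definition Dk :: "real \<Rightarrow> real \<Rightarrow> real" where "Dk k = Dab (pA k) (pB k)"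
definition Fk :: "real \<Rightarrow> real \<Rightarrow> real" where "Fk k = Fab (pA k) (pB k)"
definition Gk :: "real \<Rightarrow> real \<Rightarrow> real" where "Gk k = Gab (pA k) (pB k)"

definition Sloop :: "real \<Rightarrow> real \<Rightarrow> vec3" where
  "Sloop k \<theta> = ((Dk k \<theta> - cm k * cos \<theta>)/2, (Dk k \<theta> + cm k * cos \<theta>)/2, cm k * sin \<theta>)"

definition usol :: "real \<Rightarrow> real \<Rightarrow> real \<Rightarrow> vec3" where
  "usol k \<theta>0 t = Sloop k (Gk k (t + Fk k \<theta>0))"

locale kpar =
  fixes k :: real
  assumes k0: "0 < k" and k1: "k < 1/2"
begin

lemma pA_pos: "pA k > 0" using k0 by (simp add: pA_def)
lemma pB_pos: "pB k > 0" using k0 by (simp add: pB_def)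
lemma cm_pos: "cm k > 0" using k1 by (simp add: cm_def)
lemma cm_sq: "(cm k)^2 = 1 - 2*k" using k1 by (simp add: cm_def)

lemmas AB = pA_pos pB_pos

lemma Dk_pos: "Dk k \<theta> > 0" unfolding Dk_def by (rule Dab_pos[OF AB])

lemma Dk_sq: "(Dk k \<theta>)^2 = 4*k + (cm k)^2 * (cos \<theta>)^2"
proof -
  have "(Dk k \<theta>)^2 = (1 + 2*k) * (cos \<theta>)^2 + 4*k * (sin \<theta>)^2"
    unfolding Dk_def Dab_sq[OF AB] using k0 by (simp add: pA_def pB_def power_mult_distrib)
  also have "\<dots> = 4*k + (cm k)^2 * (cos \<theta>)^2"
    unfolding cm_sq using sin_cos_squared_add[of \<theta>] by algebra
  finally show ?thesis .
qed

lemma Dk_gt: "Dk k \<theta> > \<bar>cm k * cos \<theta>\<bar>"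
proof -
  have "(cm k * cos \<theta>)^2 < (Dk k \<theta>)^2" unfolding Dk_sq using k0 by (simp add: power_mult_distrib)
  then have "\<bar>cm k * cos \<theta>\<bar>^2 < (Dk k \<theta>)^2" by simp
  then show ?thesis using Dk_pos[of \<theta>] power_less_imp_less_base[of "\<bar>cm k * cos \<theta>\<bar>" 2 "Dk k \<theta>"] by simp
qed

lemma Dk_deriv: "(Dk k has_real_derivative (- ((cm k)^2 * sin \<theta> * cos \<theta>) / Dk k \<theta>)) (at \<theta>)"
proof -
  have "(Dk k has_real_derivative (sin \<theta> * cos \<theta> * ((pB k)^2 - (pA k)^2) / Dk k \<theta>)) (at \<theta>)"
    unfolding Dk_def by (rule Dab_deriv[OF AB])
  moreover have "(pB k)^2 - (pA k)^2 = - ((cm k)^2)"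
    unfolding cm_sq using k0 by (simp add: pA_def pB_def power_mult_distrib)
  ultimately show ?thesis by (simp add: mult_ac)
qed

lemma Gk_deriv: "(Gk k has_real_derivative Dk k (Gk k t)) (at t)"
  unfolding Gk_def Dk_def by (rule Gab_deriv[OF AB])

lemma Fk_Gk: "Fk k (Gk k t) = t" unfolding Fk_def Gk_def by (rule Fab_Gab[OF AB])
lemma Gk_Fk: "Gk k (Fk k x) = x" unfolding Fk_def Gk_def by (rule Gab_Fab[OF AB])
lemma Fk_mono: "Fk k x < Fk k y \<longleftrightarrow> x < y" "Fk k x \<le> Fk k y \<longleftrightarrow> x \<le> y"
  unfolding Fk_def using Fab_mono_iff[OF AB] by auto
lemma Gk_mono: "Gk k x < Gk k y \<longleftrightarrow> x < y" "Gk k x \<le> Gk k y \<longleftrightarrow> x \<le> y"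
  unfolding Gk_def using Gab_mono_iff[OF AB] by auto

lemma usol_deriv: "(usol k \<theta>0 has_vector_derivative Sigma_field (usol k \<theta>0 t)) (at t)"
proof -
  define \<Theta> where "\<Theta> t = Gk k (t + Fk k \<theta>0)" for t
  have dT: "(\<Theta> has_real_derivative Dk k (\<Theta> t)) (at t)"
  proof -
    have inner: "((\<lambda>t. t + Fk k \<theta>0) has_real_derivative 1) (at t)"
      by (auto intro!: derivative_eq_intros)
    show ?thesis unfolding \<Theta>_def[abs_def] using DERIV_chain2[OF Gk_deriv inner] by simp
  qed
  define th where "th = \<Theta> t"
  define D where "D = Dk k th"
  define c where "c = cos th"
  define s where "s = sin th"
  define m where "m = cm k"
  have Dpos: "D > 0" unfolding D_def by (rule Dk_pos)
  have dD: "((\<lambda>t. Dk k (\<Theta> t)) has_real_derivative (- (m^2 * s * c) / D) * D) (at t)"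
    unfolding m_def s_def c_def D_def th_def by (rule DERIV_chain2[OF Dk_deriv dT])
  have d1: "((\<lambda>t. (Dk k (\<Theta> t) - cm k * cos (\<Theta> t))/2) has_real_derivative
      ((- (m^2 * s * c) / D) * D - m * (- s * D))/2) (at t)"
    using dD dT unfolding m_def s_def c_def D_def th_def
    by (auto intro!: derivative_eq_intros)
  have d2: "((\<lambda>t. (Dk k (\<Theta> t) + cm k * cos (\<Theta> t))/2) has_real_derivative
      ((- (m^2 * s * c) / D) * D + m * (- s * D))/2) (at t)"
    using dD dT unfolding m_def s_def c_def D_def th_def
    by (auto intro!: derivative_eq_intros)
  have d3: "((\<lambda>t. cm k * sin (\<Theta> t)) has_real_derivative m * (c * D)) (at t)"
    using dT unfolding m_def s_def c_def D_def th_def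
    by (auto intro!: derivative_eq_intros)
  have Dsq: "D^2 = 4*k + m^2 * c^2" unfolding D_def m_def c_def by (rule Dk_sq)
  have e1: "((- (m^2 * s * c) / D) * D - m * (- s * D))/2 = ((D - m * c)/2) * (m * s)"
    using Dpos by (simp add: field_simps power2_eq_square)
  have e2: "((- (m^2 * s * c) / D) * D + m * (- s * D))/2 = - (((D + m * c)/2) * (m * s))"
    using Dpos by (simp add: field_simps power2_eq_square)
  have e3: "m * (c * D) = - (((D - m * c)/2)^2) + ((D + m * c)/2)^2"
    by (simp add: power2_eq_square field_simps)
  have "((\<lambda>t. ((Dk k (\<Theta> t) - cm k * cos (\<Theta> t))/2, (Dk k (\<Theta> t) + cm k * cos (\<Theta> t))/2, cm k * sin (\<Theta> t)))
     has_vector_derivative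
      (((D - m * c)/2) * (m * s), - (((D + m * c)/2) * (m * s)), - (((D - m * c)/2)^2) + ((D + m * c)/2)^2)) (at t)"
    using vderiv3_mk[OF d1 d2 d3] unfolding e1 e2 e3 .
  moreover have "Sigma_field (usol k \<theta>0 t) =
      (((D - m * c)/2) * (m * s), - (((D + m * c)/2) * (m * s)), - (((D - m * c)/2)^2) + ((D + m * c)/2)^2)"
    unfolding usol_def Sloop_def Sigma_field_def \<Theta>_def[symmetric] th_def[symmetric] D_def[symmetric]
      m_def[symmetric] c_def[symmetric] s_def[symmetric] by simp
  ultimately show ?thesis unfolding usol_def Sloop_def \<Theta>_def[symmetric] by simp
qed

end


context kpar
begin

lemma usol_0: "usol k \<theta>0 0 = Sloop k \<theta>0"
  unfolding usol_def by (simp add: Gk_Fk)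

lemma Sigma_flow_usol:
  assumes "Sloop k \<theta>0 = p"
  shows "Sigma_flow s p = usol k \<theta>0 s"
  unfolding Sigma_flow_def
proof (rule the_equality)
  show "\<exists>u. u 0 = p \<and> (\<forall>t. (u has_vector_derivative Sigma_field (u t)) (at t)) \<and> u s = usol k \<theta>0 s"
    by (intro exI[of _ "usol k \<theta>0"]) (use usol_deriv usol_0 assms in auto)
next
  fix q assume "\<exists>u. u 0 = p \<and> (\<forall>t. (u has_vector_derivative Sigma_field (u t)) (at t)) \<and> u s = q"
  then obtain u where u: "u 0 = p" "\<And>t. (u has_vector_derivative Sigma_field (u t)) (at t)" "u s = q"
    by blast
  have "u s = usol k \<theta>0 s"
    by (rule sigma_unique[OF u(2) usol_deriv]) (use u(1) usol_0 assms in auto)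
  then show "q = usol k \<theta>0 s" using u(3) by simp
qed

lemma loop_init:
  assumes "x0 > 0" "y0 > 0" "x0 * y0 = k" "x0^2 + y0^2 + z0^2 = 1" "z0 > 0"
  obtains \<theta>0 where "0 < \<theta>0" "\<theta>0 < pi" "Sloop k \<theta>0 = (x0, y0, z0)"
proof -
  define m where "m = cm k"
  have m: "m > 0" using cm_pos m_def by simp
  have "((y0 - x0)/m)^2 + (z0/m)^2 = 1"
  proof -
    have "(y0 - x0)^2 = x0^2 + y0^2 - 2*(x0*y0)" by (simp add: power2_diff algebra_simps)
    then have "(y0 - x0)^2 + z0^2 = m^2" unfolding m_def cm_sq using assms(3,4) by linarith
    then show ?thesis using m by (simp add: power_divide field_simps)
  qed
  then obtain t where t: "0 \<le> t" "t < 2*pi" "(y0 - x0)/m = cos t" "z0/m = sin t"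
    by (rule sincos_total_2pi)
  have st: "sin t > 0" using t(4) m assms(5) by (metis divide_pos_pos)
  have t0: "0 < t" using st t(1) by (cases "t = 0") auto
  have tpi: "t < pi" using st sin_le_zero[of t] t(2) by (cases "pi \<le> t") auto
  have cs: "m * cos t = y0 - x0" "m * sin t = z0" using t(3,4) m by (auto simp: field_simps)
  have D: "Dk k t = x0 + y0"
  proof -
    have "(Dk k t)^2 = (x0 + y0)^2" unfolding Dk_sq m_def[symmetric]
      using cs(1) assms(3) by (simp add: power_mult_distrib[symmetric]) algebra
    then show ?thesis using Dk_pos[of t] assms(1,2) by (simp add: power2_eq_iff_nonneg)
  qed
  show ?thesis
    by (rule that[OF t0 tpi]) (simp add: Sloop_def D cs m_def[symmetric])
qed

lemma Sloop_sym:
  assumes "Sloop k \<theta>0 = (x0, y0, z0)" "Sloop k \<psi> = (x0, y0, -z0)"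
  shows "\<exists>n::int. \<psi> = -\<theta>0 + 2 * pi * n"
proof -
  have m: "cm k > 0" by (rule cm_pos)
  have c1: "cm k * sin \<psi> = - (cm k * sin \<theta>0)" using assms unfolding Sloop_def by auto
  have c2: "cm k * cos \<psi> = cm k * cos \<theta>0"
  proof -
    have "(Dk k \<psi> + cm k * cos \<psi>)/2 - (Dk k \<psi> - cm k * cos \<psi>)/2 = y0 - x0"
      "(Dk k \<theta>0 + cm k * cos \<theta>0)/2 - (Dk k \<theta>0 - cm k * cos \<theta>0)/2 = y0 - x0"
      using assms unfolding Sloop_def by auto
    moreover have e: "(D + p)/2 - (D - p)/2 = p" for D p :: real by (simp add: field_simps)
    ultimately show ?thesis by simp
  qed
  have "cm k * sin \<psi> = cm k * (- sin \<theta>0)" using c1 by simp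
  then have "sin \<psi> = - sin \<theta>0" using mult_left_cancel[of "cm k" "sin \<psi>" "- sin \<theta>0"] m by simp
  then have "sin \<psi> = sin (-\<theta>0) \<and> cos \<psi> = cos (-\<theta>0)" using c2 m by simp
  then show ?thesis using sin_cos_eq_iff by blast
qed

definition Pk :: real where "Pk = Fk k (2*pi)"

lemma Fk_shift2pi: "Fk k (\<theta> + 2*pi) = Fk k \<theta> + Pk"
proof -
  have sh: "Fk k (x + pi) = Fk k x + Fk k pi" for x unfolding Fk_def by (rule Fab_shift[OF AB])
  have "Fk k (\<theta> + 2*pi) = Fk k ((\<theta> + pi) + pi)" by (simp add: algebra_simps)
  also have "\<dots> = Fk k \<theta> + 2 * Fk k pi" unfolding sh by simp
  finally have 1: "Fk k (\<theta> + 2*pi) = Fk k \<theta> + 2 * Fk k pi" .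
  have "Pk = Fk k ((0 + pi) + pi)" unfolding Pk_def by simp
  also have "\<dots> = 2 * Fk k pi" unfolding sh by (simp add: Fk_def)
  finally show ?thesis using 1 by simp
qed

lemma Pk_eq: "Pk = 4 * Fab (pA k) (pB k) (pi/2)"
  using Fk_shift2pi[of 0] Fab_half[OF AB] Fab_shift[OF AB, of pi] unfolding Fk_def Pk_def
  by simp

lemma loop_period_le: "loop_period k \<le> Pk"
proof -
  have "pi / agm (sqrt k) (sqrt (1 + 2 * (sqrt k)^2) / 2)
     \<le> 4 * Fab (2 * (sqrt (1 + 2 * (sqrt k)^2) / 2)) (2 * sqrt k) (pi/2)"
    by (rule period_ge_agm) (use k0 in auto)
  then show ?thesis unfolding loop_period_def Pk_eq pA_def pB_def using k0 by simp
qed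

lemma Pk_le: "Pk \<le> pi / sqrt k"
proof -
  define H where "H x = x * (1 / (2 * sqrt k)) - Fk k x" for x
  have sk: "sqrt k / (2*k) = 1/(2* sqrt k)"
  proof -
    have "k = sqrt k * sqrt k" using k0 by simp
    then have "sqrt k / (2*k) = sqrt k / (2 * (sqrt k * sqrt k))" by simp
    also have "\<dots> = 1/(2* sqrt k)" using k0 by (simp add: field_simps)
    finally show ?thesis .
  qed
  have "H 0 \<le> H (2*pi)"
  proof (rule DERIV_nonneg_imp_nondecreasing[of 0 "2*pi" H])
    show "0 \<le> 2*pi" by simp
    fix x
    have "(H has_real_derivative 1 / (2 * sqrt k) - 1 / Dk k x) (at x)"
      unfolding H_def[abs_def] Fk_def Dk_def using Fab_deriv[OF AB] k0
      by (auto intro!: derivative_eq_intros simp: sk)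
    moreover have "2 * sqrt k \<le> Dk k x"
    proof -
      have "(2 * sqrt k)^2 \<le> (Dk k x)^2" unfolding Dk_sq using k0 by (simp add: power_mult_distrib)
      then show ?thesis using Dk_pos[of x] power2_le_imp_le[of "2 * sqrt k" "Dk k x"] by simp
    qed
    then have "1 / (2 * sqrt k) - 1 / Dk k x \<ge> 0" using k0 by (simp add: frac_le)
    ultimately show "\<exists>y. (H has_real_derivative y) (at x) \<and> y \<ge> 0" by blast
  qed
  then have "Fk k (2*pi) \<le> 2*pi * (1 / (2* sqrt k))" unfolding H_def by (simp add: Fk_def)
  also have "2*pi * (1 / (2* sqrt k)) = pi / sqrt k" by simp
  finally show ?thesis unfolding Pk_def .
qed

end


lemma sol_geo_acc_eq: "sol_geo_acc p v =
   (2 * fst v * snd (snd v), - (2 * fst (snd v) * snd (snd v)),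
    - (exp (- (2 * snd (snd p))) * (fst v)^2) + exp (2 * snd (snd p)) * (fst (snd v))^2)"
  by (cases p, cases v) (simp add: sol_geo_acc_def)

definition frame :: "(real \<Rightarrow> vec3) \<Rightarrow> (real \<Rightarrow> vec3) \<Rightarrow> real \<Rightarrow> vec3" where
  "frame \<gamma> \<gamma>' t = (exp (- snd (snd (\<gamma> t))) * fst (\<gamma>' t), exp (snd (snd (\<gamma> t))) * fst (snd (\<gamma>' t)),
     snd (snd (\<gamma>' t)))"

lemma frame_deriv:
  assumes g: "\<And>t. (\<gamma> has_vector_derivative \<gamma>' t) (at t)"
    and g': "\<And>t. (\<gamma>' has_vector_derivative sol_geo_acc (\<gamma> t) (\<gamma>' t)) (at t)"
  shows "(frame \<gamma> \<gamma>' has_vector_derivative Sigma_field (frame \<gamma> \<gamma>' t)) (at t)"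
proof -
  define x where "x t = fst (\<gamma> t)" for t
  define y where "y t = fst (snd (\<gamma> t))" for t
  define z where "z t = snd (snd (\<gamma> t))" for t
  define u where "u t = fst (\<gamma>' t)" for t
  define w where "w t = fst (snd (\<gamma>' t))" for t
  define r where "r t = snd (snd (\<gamma>' t))" for t
  have dz: "(z has_real_derivative r t) (at t)"
    using vderiv3(3)[of \<gamma> "u t" "w t" "r t" t] g[of t] unfolding z_def u_def w_def r_def by simp
  have g'': "(\<gamma>' has_vector_derivative (2 * u t * r t, - (2 * w t * r t),
      - (exp (- (2 * z t)) * (u t)^2) + exp (2 * z t) * (w t)^2)) (at t)"
    using g'[of t] unfolding sol_geo_acc_eq u_def w_def r_def z_def by simp
  note d = vderiv3[OF g'', folded u_def w_def r_def]
  have e1: "((\<lambda>t. exp (- z t) * u t) has_real_derivative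
     exp (- z t) * u t * r t) (at t)"
  proof -
    have "((\<lambda>t. exp (- z t) * u t) has_real_derivative
       exp (- z t) * (- r t) * u t + exp (- z t) * (2 * u t * r t)) (at t)"
      using dz d(1) by (auto intro!: derivative_eq_intros)
    then show ?thesis by (simp add: algebra_simps)
  qed
  have e2: "((\<lambda>t. exp (z t) * w t) has_real_derivative
     - (exp (z t) * w t * r t)) (at t)"
  proof -
    have "((\<lambda>t. exp (z t) * w t) has_real_derivative
       exp (z t) * r t * w t + exp (z t) * (- (2 * w t * r t))) (at t)"
      using dz d(2) by (auto intro!: derivative_eq_intros)
    then show ?thesis by (simp add: algebra_simps)
  qed
  have e3: "- (exp (- (2 * z t)) * (u t)^2) + exp (2 * z t) * (w t)^2
     = - ((exp (- z t) * u t)^2) + (exp (z t) * w t)^2"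
  proof -
    have "exp (- z t) * exp (- z t) = exp (- (2 * z t))" by (simp add: mult_exp_exp)
    then have "(exp (- z t) * u t)^2 = exp (- (2 * z t)) * (u t)^2"
      by (simp add: power_mult_distrib power2_eq_square)
    moreover have "exp (z t) * exp (z t) = exp (2 * z t)" by (simp add: mult_exp_exp)
    then have "(exp (z t) * w t)^2 = exp (2 * z t) * (w t)^2"
      by (simp add: power_mult_distrib power2_eq_square)
    ultimately show ?thesis by simp
  qed
  have "((\<lambda>t. (exp (- z t) * u t, exp (z t) * w t, r t)) has_vector_derivative
     (exp (- z t) * u t * r t, - (exp (z t) * w t * r t),
      - ((exp (- z t) * u t)^2) + (exp (z t) * w t)^2)) (at t)"
    using vderiv3_mk[OF e1 e2 d(3)] unfolding e3 .
  moreover have "frame \<gamma> \<gamma>' = (\<lambda>t. (exp (- z t) * u t, exp (z t) * w t, r t))"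
    by (simp add: frame_def fun_eq_iff z_def u_def w_def r_def)
  ultimately show ?thesis by (simp add: Sigma_field_def)
qed

lemma deriv_eq_const:
  assumes "\<And>t. (f has_real_derivative d t) (at t)" "\<And>t. (g has_real_derivative d t) (at t)" "f 0 = g 0"
  shows "f t = g t"
proof -
  have "\<forall>t. ((\<lambda>t. f t - g t) has_real_derivative 0) (at t)"
  proof
    fix t show "((\<lambda>t. f t - g t) has_real_derivative 0) (at t)"
      using assms(1,2)[of t] by (auto intro!: derivative_eq_intros)
  qed
  from DERIV_isconst_all[OF this, of t 0] assms(3) show ?thesis by simp
qed

lemma geo_unique:
  assumes g1: "\<And>t. (\<gamma>1 has_vector_derivative \<gamma>1' t) (at t)"
    and g1': "\<And>t. (\<gamma>1' has_vector_derivative sol_geo_acc (\<gamma>1 t) (\<gamma>1' t)) (at t)"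
    and g2: "\<And>t. (\<gamma>2 has_vector_derivative \<gamma>2' t) (at t)"
    and g2': "\<And>t. (\<gamma>2' has_vector_derivative sol_geo_acc (\<gamma>2 t) (\<gamma>2' t)) (at t)"
    and i0: "\<gamma>1 0 = \<gamma>2 0" "\<gamma>1' 0 = \<gamma>2' 0"
  shows "\<gamma>1 t = \<gamma>2 t"
proof -
  have fr: "frame \<gamma>1 \<gamma>1' s = frame \<gamma>2 \<gamma>2' s" for s
    by (rule sigma_unique[OF frame_deriv[OF g1 g1'] frame_deriv[OF g2 g2']])
       (simp add: frame_def i0)
  define z1 where "z1 s = snd (snd (\<gamma>1 s))" for s
  define z2 where "z2 s = snd (snd (\<gamma>2 s))" for s
  have dz1: "(z1 has_real_derivative snd (snd (\<gamma>1' s))) (at s)" for s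
    using vderiv3(3)[of \<gamma>1 "fst (\<gamma>1' s)" "fst (snd (\<gamma>1' s))" "snd (snd (\<gamma>1' s))" s] g1[of s]
    unfolding z1_def by simp
  have dz2: "(z2 has_real_derivative snd (snd (\<gamma>1' s))) (at s)" for s
    using vderiv3(3)[of \<gamma>2 "fst (\<gamma>2' s)" "fst (snd (\<gamma>2' s))" "snd (snd (\<gamma>2' s))" s] g2[of s] fr[of s]
    unfolding z2_def by (simp add: frame_def)
  have zz: "z1 s = z2 s" for s by (rule deriv_eq_const[OF dz1 dz2]) (simp add: z1_def z2_def i0)
  have dx1: "((\<lambda>s. fst (\<gamma>1 s)) has_real_derivative fst (\<gamma>1' s)) (at s)" for s
    using vderiv3(1)[of \<gamma>1 "fst (\<gamma>1' s)" "fst (snd (\<gamma>1' s))" "snd (snd (\<gamma>1' s))" s] g1[of s] by simp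
  have dx2: "((\<lambda>s. fst (\<gamma>2 s)) has_real_derivative fst (\<gamma>1' s)) (at s)" for s
  proof -
    have "exp (- z1 s) * fst (\<gamma>1' s) = exp (- z2 s) * fst (\<gamma>2' s)"
      using fr[of s] unfolding frame_def z1_def z2_def by simp
    then have "fst (\<gamma>1' s) = fst (\<gamma>2' s)" using zz[of s] by simp
    then show ?thesis
      using vderiv3(1)[of \<gamma>2 "fst (\<gamma>2' s)" "fst (snd (\<gamma>2' s))" "snd (snd (\<gamma>2' s))" s] g2[of s] by simp
  qed
  have dy1: "((\<lambda>s. fst (snd (\<gamma>1 s))) has_real_derivative fst (snd (\<gamma>1' s))) (at s)" for s
    using vderiv3(2)[of \<gamma>1 "fst (\<gamma>1' s)" "fst (snd (\<gamma>1' s))" "snd (snd (\<gamma>1' s))" s] g1[of s] by simp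
  have dy2: "((\<lambda>s. fst (snd (\<gamma>2 s))) has_real_derivative fst (snd (\<gamma>1' s))) (at s)" for s
  proof -
    have "exp (z1 s) * fst (snd (\<gamma>1' s)) = exp (z2 s) * fst (snd (\<gamma>2' s))"
      using fr[of s] unfolding frame_def z1_def z2_def by simp
    then have "fst (snd (\<gamma>1' s)) = fst (snd (\<gamma>2' s))" using zz[of s] by simp
    then show ?thesis
      using vderiv3(2)[of \<gamma>2 "fst (\<gamma>2' s)" "fst (snd (\<gamma>2' s))" "snd (snd (\<gamma>2' s))" s] g2[of s] by simp
  qed
  have "fst (\<gamma>1 t) = fst (\<gamma>2 t)" by (rule deriv_eq_const[OF dx1 dx2]) (simp add: i0)
  moreover have "fst (snd (\<gamma>1 t)) = fst (snd (\<gamma>2 t))" by (rule deriv_eq_const[OF dy1 dy2]) (simp add: i0)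
  moreover have "snd (snd (\<gamma>1 t)) = snd (snd (\<gamma>2 t))" using zz[of t] by (simp add: z1_def z2_def)
  ultimately show ?thesis by (simp add: prod_eq_iff)
qed


definition Ha :: "real \<Rightarrow> real \<Rightarrow> real" where
  "Ha k = prim (\<lambda>\<theta>. (fst (Sloop k \<theta>))^2 / Dk k \<theta>)"
definition Hb :: "real \<Rightarrow> real \<Rightarrow> real" where
  "Hb k = prim (\<lambda>\<theta>. (fst (snd (Sloop k \<theta>)))^2 / Dk k \<theta>)"

definition geo :: "real \<Rightarrow> real \<Rightarrow> real \<Rightarrow> real \<Rightarrow> real \<Rightarrow> real \<Rightarrow> vec3" where
  "geo k \<theta>0 x0 y0 s0 t = ((Ha k (Gk k (s0 * t + Fk k \<theta>0)) - Ha k \<theta>0) / x0,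
      (Hb k (Gk k (s0 * t + Fk k \<theta>0)) - Hb k \<theta>0) / y0,
      ln (fst (usol k \<theta>0 (s0 * t)) / x0))"

definition geo' :: "real \<Rightarrow> real \<Rightarrow> real \<Rightarrow> real \<Rightarrow> real \<Rightarrow> real \<Rightarrow> vec3" where
  "geo' k \<theta>0 x0 y0 s0 t = (s0 * (fst (usol k \<theta>0 (s0 * t)))^2 / x0,
      s0 * (fst (snd (usol k \<theta>0 (s0 * t))))^2 / y0, s0 * snd (snd (usol k \<theta>0 (s0 * t))))"

context kpar
begin

lemma Dk_cont: "continuous_on UNIV (Dk k)"
  using DERIV_isCont[OF Dk_deriv] continuous_at_imp_continuous_on by blast

lemma Sloop_pos: "fst (Sloop k \<theta>) > 0" "fst (snd (Sloop k \<theta>)) > 0"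
  using Dk_gt[of \<theta>] unfolding Sloop_def by auto

lemma Sloop_prod: "fst (Sloop k \<theta>) * fst (snd (Sloop k \<theta>)) = k"
proof -
  have "fst (Sloop k \<theta>) * fst (snd (Sloop k \<theta>)) = ((Dk k \<theta>)^2 - (cm k * cos \<theta>)^2)/4"
    unfolding Sloop_def by (simp add: power2_eq_square field_simps)
  also have "\<dots> = k" unfolding Dk_sq by (simp add: power_mult_distrib)
  finally show ?thesis .
qed

lemma usol_pos: "fst (usol k \<theta>0 t) > 0" "fst (snd (usol k \<theta>0 t)) > 0"
  unfolding usol_def using Sloop_pos by auto

lemma usol_prod: "fst (usol k \<theta>0 t) * fst (snd (usol k \<theta>0 t)) = k"
  unfolding usol_def using Sloop_prod by auto

lemma Ha_deriv: "(Ha k has_real_derivative (fst (Sloop k \<theta>))^2 / Dk k \<theta>) (at \<theta>)"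
  unfolding Ha_def
  by (rule prim_deriv) (use Dk_cont Dk_pos in \<open>auto simp: Sloop_def intro!: continuous_intros
      simp: less_imp_neq[symmetric]\<close>)

lemma Hb_deriv: "(Hb k has_real_derivative (fst (snd (Sloop k \<theta>)))^2 / Dk k \<theta>) (at \<theta>)"
  unfolding Hb_def
  by (rule prim_deriv) (use Dk_cont Dk_pos in \<open>auto simp: Sloop_def intro!: continuous_intros
      simp: less_imp_neq[symmetric]\<close>)

lemma Hb_strict: assumes "x < y" shows "Hb k x < Hb k y"
proof (rule DERIV_pos_imp_increasing[OF assms])
  fix z
  show "\<exists>d. (Hb k has_real_derivative d) (at z) \<and> 0 < d"
    by (intro exI[of _ "(fst (snd (Sloop k z)))^2 / Dk k z"] conjI Hb_deriv)
       (use Sloop_pos(2)[of z] Dk_pos[of z] in auto)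
qed

lemma Theta_deriv: "((\<lambda>t. Gk k (s0 * t + Fk k \<theta>0)) has_real_derivative
    Dk k (Gk k (s0 * t + Fk k \<theta>0)) * s0) (at t)"
proof -
  have inner: "((\<lambda>t. s0 * t + Fk k \<theta>0) has_real_derivative s0) (at t)"
    by (auto intro!: derivative_eq_intros)
  show ?thesis using DERIV_chain2[OF Gk_deriv inner] by simp
qed

lemma geo_solves:
  assumes "s0 > 0" "x0 > 0" "y0 > 0" "Sloop k \<theta>0 = (x0, y0, z0)"
  shows "(geo k \<theta>0 x0 y0 s0 has_vector_derivative geo' k \<theta>0 x0 y0 s0 t) (at t)"
    "(geo' k \<theta>0 x0 y0 s0 has_vector_derivative
        sol_geo_acc (geo k \<theta>0 x0 y0 s0 t) (geo' k \<theta>0 x0 y0 s0 t)) (at t)"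
proof -
  define u where "u = usol k \<theta>0"
  define A where "A \<tau> = fst (u \<tau>)" for \<tau>
  define B where "B \<tau> = fst (snd (u \<tau>))" for \<tau>
  define C where "C \<tau> = snd (snd (u \<tau>))" for \<tau>
  define \<Theta> where "\<Theta> t = Gk k (s0 * t + Fk k \<theta>0)" for t
  have uT: "u (s0 * t) = Sloop k (\<Theta> t)" for t unfolding u_def usol_def \<Theta>_def by (simp add: mult.commute)
  have Apos: "A \<tau> > 0" "B \<tau> > 0" for \<tau> unfolding A_def B_def u_def using usol_pos by auto
  have AB: "A \<tau> * B \<tau> = k" for \<tau> unfolding A_def B_def u_def using usol_prod by auto
  note du = sigma_comp_derivs[OF usol_deriv[of \<theta>0], folded u_def, folded A_def B_def C_def]
  have inner: "((\<lambda>t. s0 * t) has_real_derivative s0) (at t)" for t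
    by (auto intro!: derivative_eq_intros)
  have dA: "((\<lambda>t. A (s0 * t)) has_real_derivative A (s0 * t) * C (s0 * t) * s0) (at t)" for t
    using DERIV_chain2[OF du(1) inner] .
  have dB: "((\<lambda>t. B (s0 * t)) has_real_derivative - (B (s0 * t) * C (s0 * t)) * s0) (at t)" for t
    using DERIV_chain2[OF du(2) inner] .
  have dC: "((\<lambda>t. C (s0 * t)) has_real_derivative (- (A (s0 * t)^2) + B (s0 * t)^2) * s0) (at t)" for t
    using DERIV_chain2[OF du(3) inner] .
  have dT: "(\<Theta> has_real_derivative Dk k (\<Theta> t) * s0) (at t)" for t
    unfolding \<Theta>_def[abs_def] by (rule Theta_deriv)
  have Ath: "fst (Sloop k (\<Theta> t)) = A (s0 * t)" "fst (snd (Sloop k (\<Theta> t))) = B (s0 * t)" for t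
    unfolding A_def B_def uT by auto
  have dx: "((\<lambda>t. (Ha k (\<Theta> t) - Ha k \<theta>0) / x0) has_real_derivative s0 * (A (s0 * t))^2 / x0) (at t)"
  proof -
    have "((\<lambda>t. (Ha k (\<Theta> t) - Ha k \<theta>0) / x0) has_real_derivative
       ((fst (Sloop k (\<Theta> t)))^2 / Dk k (\<Theta> t) * (Dk k (\<Theta> t) * s0) - 0) / x0) (at t)"
      by (rule DERIV_cdivide[OF DERIV_diff[OF DERIV_chain2[OF Ha_deriv dT] DERIV_const]])
    then show ?thesis using Dk_pos[of "\<Theta> t"] unfolding Ath by (simp add: field_simps)
  qed
  have dy: "((\<lambda>t. (Hb k (\<Theta> t) - Hb k \<theta>0) / y0) has_real_derivative s0 * (B (s0 * t))^2 / y0) (at t)"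
  proof -
    have "((\<lambda>t. (Hb k (\<Theta> t) - Hb k \<theta>0) / y0) has_real_derivative
       ((fst (snd (Sloop k (\<Theta> t))))^2 / Dk k (\<Theta> t) * (Dk k (\<Theta> t) * s0) - 0) / y0) (at t)"
      by (rule DERIV_cdivide[OF DERIV_diff[OF DERIV_chain2[OF Hb_deriv dT] DERIV_const]])
    then show ?thesis using Dk_pos[of "\<Theta> t"] unfolding Ath by (simp add: field_simps)
  qed
  have dz: "((\<lambda>t. ln (A (s0 * t) / x0)) has_real_derivative s0 * C (s0 * t)) (at t)"
  proof -
    have "((\<lambda>t. ln (A (s0 * t) / x0)) has_real_derivative
        (A (s0 * t) * C (s0 * t) * s0 / x0) / (A (s0 * t) / x0)) (at t)"
      using dA[of t] Apos[of "s0 * t"] assms(2)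
      by (auto intro!: derivative_eq_intros)
    then show ?thesis using Apos[of "s0 * t"] assms(2) by (simp add: field_simps)
  qed
  have geo_eq: "geo k \<theta>0 x0 y0 s0 = (\<lambda>t. ((Ha k (\<Theta> t) - Ha k \<theta>0) / x0,
      (Hb k (\<Theta> t) - Hb k \<theta>0) / y0, ln (A (s0 * t) / x0)))"
    unfolding geo_def \<Theta>_def A_def u_def by (simp add: fun_eq_iff)
  have geo'_eq: "geo' k \<theta>0 x0 y0 s0 = (\<lambda>t. (s0 * (A (s0 * t))^2 / x0, s0 * (B (s0 * t))^2 / y0,
      s0 * C (s0 * t)))"
    unfolding geo'_def A_def B_def C_def u_def by (simp add: fun_eq_iff)
  show "(geo k \<theta>0 x0 y0 s0 has_vector_derivative geo' k \<theta>0 x0 y0 s0 t) (at t)"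
    unfolding geo_eq geo'_eq by (rule vderiv3_mk[OF dx dy dz])
  have d1: "((\<lambda>t. s0 * (A (s0 * t))^2 / x0) has_real_derivative
      2 * (s0 * (A (s0 * t))^2 / x0) * (s0 * C (s0 * t))) (at t)"
  proof -
    have "((\<lambda>t. s0 * (A (s0 * t))^2 / x0) has_real_derivative
      s0 * (2 * A (s0 * t) * (A (s0 * t) * C (s0 * t) * s0)) / x0) (at t)"
      using dA[of t] assms(2) by (auto intro!: derivative_eq_intros simp: power2_eq_square)
    then show ?thesis by (simp add: power2_eq_square field_simps)
  qed
  have d2: "((\<lambda>t. s0 * (B (s0 * t))^2 / y0) has_real_derivative
      - (2 * (s0 * (B (s0 * t))^2 / y0) * (s0 * C (s0 * t)))) (at t)"
  proof -
    have "((\<lambda>t. s0 * (B (s0 * t))^2 / y0) has_real_derivative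
      s0 * (2 * B (s0 * t) * (- (B (s0 * t) * C (s0 * t)) * s0)) / y0) (at t)"
      using dB[of t] assms(3) by (auto intro!: derivative_eq_intros simp: power2_eq_square)
    then show ?thesis by (simp add: power2_eq_square field_simps)
  qed
  have d3: "((\<lambda>t. s0 * C (s0 * t)) has_real_derivative
      - (exp (- (2 * ln (A (s0 * t) / x0))) * (s0 * (A (s0 * t))^2 / x0)^2)
      + exp (2 * ln (A (s0 * t) / x0)) * (s0 * (B (s0 * t))^2 / y0)^2) (at t)"
  proof -
    have x0y0: "x0 * y0 = k" using assms(4) Sloop_prod[of \<theta>0] by simp
    define a where "a = A (s0 * t)"
    define b where "b = B (s0 * t)"
    have ab: "a > 0" "b > 0" "a * b = x0 * y0" using Apos AB x0y0 unfolding a_def b_def by auto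
    have e1: "exp (2 * ln (a / x0)) = (a/x0)^2"
    proof -
      have "exp (ln (a / x0)) * exp (ln (a / x0)) = exp (ln (a / x0) + ln (a / x0))"
        by (rule mult_exp_exp)
      then have "exp (2 * ln (a / x0)) = exp (ln (a / x0)) * exp (ln (a / x0))"
        by (simp only: mult_2)
      also have "\<dots> = (a/x0)^2" using ab assms(2) by (simp add: power2_eq_square)
      finally show ?thesis .
    qed
    have e2: "exp (- (2 * ln (a / x0))) = (x0/a)^2"
      using ab assms(2) by (simp add: exp_minus e1 power_divide)
    have "- (exp (- (2 * ln (a / x0))) * (s0 * a^2 / x0)^2)
      + exp (2 * ln (a / x0)) * (s0 * b^2 / y0)^2 = s0 * ((- (a^2) + b^2) * s0)"
    proof -
      have "(a/x0)^2 * (s0 * b^2 / y0)^2 = s0^2 * b^2 * ((a*b)/(x0*y0))^2"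
        by (simp add: power2_eq_square field_simps)
      also have "\<dots> = s0^2 * b^2" using ab assms(2,3) by simp
      finally have 1: "(a/x0)^2 * (s0 * b^2 / y0)^2 = s0^2 * b^2" .
      have 2: "(x0/a)^2 * (s0 * a^2 / x0)^2 = s0^2 * a^2"
        using ab assms(2) by (simp add: power2_eq_square field_simps)
      show ?thesis unfolding e1 e2 1 2 by (simp add: power2_eq_square algebra_simps)
    qed
    moreover have "((\<lambda>t. s0 * C (s0 * t)) has_real_derivative s0 * ((- (a^2) + b^2) * s0)) (at t)"
      using dC[of t] unfolding a_def b_def by (auto intro!: derivative_eq_intros)
    ultimately show ?thesis unfolding a_def b_def by simp
  qed
  have "(geo' k \<theta>0 x0 y0 s0 has_vector_derivative
     (2 * (s0 * (A (s0 * t))^2 / x0) * (s0 * C (s0 * t)),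
      - (2 * (s0 * (B (s0 * t))^2 / y0) * (s0 * C (s0 * t))),
      - (exp (- (2 * ln (A (s0 * t) / x0))) * (s0 * (A (s0 * t))^2 / x0)^2)
      + exp (2 * ln (A (s0 * t) / x0)) * (s0 * (B (s0 * t))^2 / y0)^2)) (at t)"
    unfolding geo'_eq by (rule vderiv3_mk[OF d1 d2 d3])
  then show "(geo' k \<theta>0 x0 y0 s0 has_vector_derivative
        sol_geo_acc (geo k \<theta>0 x0 y0 s0 t) (geo' k \<theta>0 x0 y0 s0 t)) (at t)"
    unfolding geo_eq geo'_eq sol_geo_acc_def by simp
qed

end


context kpar
begin

lemma sol_exp_geo:
  assumes "s0 > 0" "x0 > 0" "y0 > 0" "Sloop k \<theta>0 = (x0, y0, z0)"
  shows "sol_exp (s0 * x0, s0 * y0, s0 * z0) = geo k \<theta>0 x0 y0 s0 1"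
  unfolding sol_exp_def
proof (rule the_equality)
  have g0: "geo k \<theta>0 x0 y0 s0 0 = 0"
    unfolding geo_def using usol_0[of \<theta>0] assms(2,4) by (simp add: Gk_Fk zero_prod_def)
  have g'0: "geo' k \<theta>0 x0 y0 s0 0 = (s0 * x0, s0 * y0, s0 * z0)"
    unfolding geo'_def using usol_0[of \<theta>0] assms(2,3,4) by (simp add: power2_eq_square)
  show "\<exists>\<gamma> \<gamma>'. \<gamma> 0 = 0 \<and> \<gamma>' 0 = (s0 * x0, s0 * y0, s0 * z0) \<and>
      (\<forall>t. (\<gamma> has_vector_derivative \<gamma>' t) (at t) \<and>
           (\<gamma>' has_vector_derivative sol_geo_acc (\<gamma> t) (\<gamma>' t)) (at t)) \<and>
      \<gamma> 1 = geo k \<theta>0 x0 y0 s0 1"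
    by (intro exI[of _ "geo k \<theta>0 x0 y0 s0"] exI[of _ "geo' k \<theta>0 x0 y0 s0"])
       (use g0 g'0 geo_solves[OF assms] in auto)
next
  fix q
  assume "\<exists>\<gamma> \<gamma>'. \<gamma> 0 = 0 \<and> \<gamma>' 0 = (s0 * x0, s0 * y0, s0 * z0) \<and>
      (\<forall>t. (\<gamma> has_vector_derivative \<gamma>' t) (at t) \<and>
           (\<gamma>' has_vector_derivative sol_geo_acc (\<gamma> t) (\<gamma>' t)) (at t)) \<and> \<gamma> 1 = q"
  then obtain \<gamma> \<gamma>' where g: "\<gamma> 0 = 0" "\<gamma>' 0 = (s0 * x0, s0 * y0, s0 * z0)"
    "\<And>t. (\<gamma> has_vector_derivative \<gamma>' t) (at t)"
    "\<And>t. (\<gamma>' has_vector_derivative sol_geo_acc (\<gamma> t) (\<gamma>' t)) (at t)" "\<gamma> 1 = q"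
    by blast
  have g0: "geo k \<theta>0 x0 y0 s0 0 = 0"
    unfolding geo_def using usol_0[of \<theta>0] assms(2,4) by (simp add: Gk_Fk zero_prod_def)
  have g'0: "geo' k \<theta>0 x0 y0 s0 0 = (s0 * x0, s0 * y0, s0 * z0)"
    unfolding geo'_def using usol_0[of \<theta>0] assms(2,3,4) by (simp add: power2_eq_square)
  have "\<gamma> 1 = geo k \<theta>0 x0 y0 s0 1"
    by (rule geo_unique[OF g(3,4) geo_solves[OF assms]]) (use g g0 g'0 in auto)
  then show "q = geo k \<theta>0 x0 y0 s0 1" using g(5) by simp
qed

lemma sol_exp_y:
  assumes "s0 > 0" "x0 > 0" "y0 > 0" "Sloop k \<theta>0 = (x0, y0, z0)"
  shows "fst (snd (sol_exp (s0 * x0, s0 * y0, s0 * z0))) =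
     (Hb k (Gk k (s0 + Fk k \<theta>0)) - Hb k \<theta>0) / y0"
  unfolding sol_exp_geo[OF assms] geo_def by simp

end


context kpar
begin

definition bf :: "real \<Rightarrow> real" where "bf \<theta> = fst (snd (Sloop k \<theta>))"
definition af :: "real \<Rightarrow> real" where "af \<theta> = fst (Sloop k \<theta>)"
definition bmin :: real where "bmin = (pA k - cm k)/2"
definition bmax :: real where "bmax = (pA k + cm k)/2"

lemma pA_sq: "(pA k)^2 = 1 + 2*k" using k0 by (simp add: pA_def)
lemma pA_ge1: "pA k \<ge> 1" using k0 by (simp add: pA_def)
lemma cm_le1: "cm k \<le> 1" using k0 by (simp add: cm_def)
lemma pA_gt_cm: "cm k < pA k" using k0 k1 by (simp add: pA_def cm_def)

lemma bmin_pos: "bmin > 0" using pA_gt_cm by (simp add: bmin_def)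
lemma bminmax: "bmin * bmax = k"
proof -
  have "bmin * bmax = ((pA k)^2 - (cm k)^2)/4" by (simp add: bmin_def bmax_def power2_eq_square field_simps)
  then show ?thesis using pA_sq cm_sq by simp
qed
lemma bminmax2: "bmin^2 + bmax^2 = 1"
proof -
  have "bmin^2 + bmax^2 = ((pA k)^2 + (cm k)^2)/2" by (simp add: bmin_def bmax_def power2_eq_square field_simps)
  then show ?thesis using pA_sq cm_sq by simp
qed
lemma bmax_ge: "bmax \<ge> 1/2" using pA_ge1 cm_pos by (simp add: bmax_def)
lemma bmin_le: "bmin \<le> 2*k"
proof -
  have "bmin = k / bmax" using bminmax bmax_ge by (simp add: field_simps)
  also have "\<dots> \<le> k / (1/2)" using bmax_ge k0 by (intro divide_left_mono) auto
  finally show ?thesis by simp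
qed

lemma bf_eq: "bf \<theta> = (Dk k \<theta> + cm k * cos \<theta>)/2" by (simp add: bf_def Sloop_def)
lemma af_eq: "af \<theta> = (Dk k \<theta> - cm k * cos \<theta>)/2" by (simp add: af_def Sloop_def)
lemma bf_pos: "bf \<theta> > 0" using Sloop_pos by (simp add: bf_def)

lemma Dk_pi: "Dk k pi = pA k"
proof -
  have "(Dk k pi)^2 = (pA k)^2" unfolding Dk_sq pA_sq using cm_sq by simp
  then show ?thesis using Dk_pos[of pi] pA_ge1 by (simp add: power2_eq_iff_nonneg)
qed

lemma bf_pi: "bf pi = bmin" unfolding bf_eq Dk_pi bmin_def by simp

lemma key_id: "(cm k * sin \<theta>)^2 * (bf \<theta>)^2 = ((bf \<theta>)^2 - bmin^2) * (bmax^2 - (bf \<theta>)^2)"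
proof -
  define b where "b = bf \<theta>"
  define a where "a = af \<theta>"
  define p where "p = cm k * cos \<theta>"
  have ab: "a * b = k" unfolding a_def b_def af_def bf_def by (rule Sloop_prod)
  have sq: "a^2 + b^2 = 2*k + p^2"
  proof -
    have "a^2 + b^2 = ((Dk k \<theta>)^2 + p^2)/2" unfolding a_def b_def af_eq bf_eq p_def
      by (simp add: power2_eq_square field_simps)
    then show ?thesis unfolding Dk_sq p_def by (simp add: power_mult_distrib)
  qed
  have c2: "(cm k * sin \<theta>)^2 = 1 - 2*k - p^2"
    unfolding p_def power_mult_distrib cm_sq using sin_cos_squared_add[of \<theta>] by algebra
  have s1: "bmin^2 + bmax^2 = 1" by (rule bminmax2)
  have s2: "bmin^2 * bmax^2 = k^2" using bminmax by (simp add: power_mult_distrib[symmetric])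
  have "(b^2 - bmin^2) * (bmax^2 - b^2) = b^2 * (bmin^2 + bmax^2) - b^4 - bmin^2 * bmax^2"
    by (simp add: algebra_simps power2_eq_square power4_eq_xxxx)
  also have "\<dots> = b^2 - b^4 - k^2" unfolding s1 s2 by simp
  also have "\<dots> = (1 - 2*k - p^2) * b^2"
  proof -
    have "k^2 = a^2 * b^2" using ab by (simp add: power_mult_distrib[symmetric])
    then show ?thesis using sq by (simp add: algebra_simps power2_eq_square power4_eq_xxxx) algebra
  qed
  finally show ?thesis unfolding c2 b_def by simp
qed

lemma bf_deriv: "(bf has_real_derivative - (cm k * sin \<theta>) * bf \<theta> / Dk k \<theta>) (at \<theta>)"
proof -
  have "(bf has_real_derivative (- ((cm k)^2 * sin \<theta> * cos \<theta>) / Dk k \<theta> + cm k * (- sin \<theta>))/2) (at \<theta>)"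
    unfolding bf_eq[abs_def] by (auto intro!: derivative_eq_intros Dk_deriv)
  moreover have "(- ((cm k)^2 * sin \<theta> * cos \<theta>) / Dk k \<theta> + cm k * (- sin \<theta>))/2
      = - (cm k * sin \<theta>) * bf \<theta> / Dk k \<theta>"
    unfolding bf_eq using Dk_pos[of \<theta>] by (simp add: field_simps power2_eq_square)
  ultimately show ?thesis by simp
qed

lemma bf_cont: "continuous_on UNIV bf"
  unfolding bf_eq[abs_def] using Dk_cont by (intro continuous_intros) auto

lemma Hb_cont: "continuous_on UNIV (Hb k)"
  using DERIV_isCont[OF Hb_deriv] continuous_at_imp_continuous_on by blast

lemma Hb_reflect: "Hb k (2*pi - \<theta>) + Hb k \<theta> = 2 * Hb k pi"
proof -
  have sym: "(fst (snd (Sloop k (2*pi - x))))^2 / Dk k (2*pi - x) = (fst (snd (Sloop k x)))^2 / Dk k x" for x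
  proof -
    have "Dk k (2*pi - x) = Dk k x" unfolding Dk_def Dab_def by simp
    then show ?thesis unfolding Sloop_def by simp
  qed
  have "\<forall>x. ((\<lambda>\<theta>. Hb k (2*pi - \<theta>) + Hb k \<theta>) has_real_derivative 0) (at x)"
  proof
    fix x
    have "((\<lambda>\<theta>. Hb k (2*pi - \<theta>) + Hb k \<theta>) has_real_derivative
       (fst (snd (Sloop k (2*pi - x))))^2 / Dk k (2*pi - x) * (-1) + (fst (snd (Sloop k x)))^2 / Dk k x) (at x)"
      by (rule derivative_eq_intros DERIV_chain2[OF Hb_deriv] Hb_deriv | simp)+
    then show "((\<lambda>\<theta>. Hb k (2*pi - \<theta>) + Hb k \<theta>) has_real_derivative 0) (at x)"
      unfolding sym by simp
  qed
  from DERIV_isconst_all[OF this, of \<theta> pi] show ?thesis by simp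
qed

end


lemma sqrt_comp_deriv:
  assumes "(f has_real_derivative f') (at x)" "f x > 0"
  shows "((\<lambda>x. sqrt (f x)) has_real_derivative f' / (2 * sqrt (f x))) (at x)"
proof -
  have "((\<lambda>x. sqrt (f x)) has_real_derivative inverse (sqrt (f x)) / 2 * f') (at x)"
    by (rule DERIV_chain2[OF DERIV_real_sqrt[OF assms(2)] assms(1)])
  then show ?thesis by (simp add: field_simps)
qed

context kpar
begin

definition X1 :: real where "X1 = bmin^2"
definition X2 :: real where "X2 = bmax^2"
definition sD :: real where "sD = sqrt (X2 - X1)"
definition beta :: real where "beta = bmin / sD"
definition uu :: "real \<Rightarrow> real" where "uu \<theta> = sqrt ((bf \<theta>)^2 - X1)"
definition vv :: "real \<Rightarrow> real" where "vv \<theta> = sqrt (X2 - (bf \<theta>)^2)"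
definition Lam :: "real \<Rightarrow> real" where "Lam \<theta> = (sD - vv \<theta>) + beta * (uu \<theta> + sD - vv \<theta>)"

lemma Delta_eq: "X2 - X1 = cm k * pA k"
  unfolding X1_def X2_def bmin_def bmax_def by (simp add: power2_eq_square field_simps)

lemma Delta_pos: "X2 - X1 > 0" unfolding Delta_eq using cm_pos pA_ge1 by simp
lemma sD_pos: "sD > 0" unfolding sD_def using Delta_pos by simp
lemma beta_pos: "beta > 0" unfolding beta_def using bmin_pos sD_pos by simp

lemma Y_bounds:
  assumes "0 < \<theta>" "\<theta> < pi"
  shows "X1 < (bf \<theta>)^2" "(bf \<theta>)^2 < X2"
proof -
  have c: "cm k * sin \<theta> > 0" using cm_pos sin_gt_zero[OF assms] by simp
  have "(cm k * sin \<theta>)^2 * (bf \<theta>)^2 > 0" using c bf_pos[of \<theta>] by (intro mult_pos_pos) auto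
  then have "((bf \<theta>)^2 - X1) * (X2 - (bf \<theta>)^2) > 0"
    unfolding X1_def X2_def key_id by simp
  then have "((bf \<theta>)^2 - X1 > 0 \<and> X2 - (bf \<theta>)^2 > 0) \<or> ((bf \<theta>)^2 - X1 < 0 \<and> X2 - (bf \<theta>)^2 < 0)"
    by (simp add: zero_less_mult_iff)
  then show "X1 < (bf \<theta>)^2" "(bf \<theta>)^2 < X2" using Delta_pos by auto
qed

lemma Lam_pi: "Lam pi = 0"
  unfolding Lam_def uu_def vv_def bf_pi X1_def sD_def by simp

lemma Psi_deriv:
  assumes "0 < \<theta>" "\<theta> < pi"
  shows "\<exists>l. ((\<lambda>\<theta>. Lam \<theta> + Hb k \<theta>) has_real_derivative l) (at \<theta>) \<and> l \<le> 0"
proof -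
  define b where "b = bf \<theta>"
  define c where "c = cm k * sin \<theta>"
  define D where "D = Dk k \<theta>"
  have bpos: "b > 0" unfolding b_def by (rule bf_pos)
  have cpos: "c > 0" unfolding c_def using cm_pos sin_gt_zero[OF assms] by simp
  have Dpos: "D > 0" unfolding D_def by (rule Dk_pos)
  note Yb = Y_bounds[OF assms, folded b_def]
  have upos: "uu \<theta> > 0" "vv \<theta> > 0" unfolding uu_def vv_def b_def[symmetric] using Yb by auto
  have usq: "(uu \<theta>)^2 = b^2 - X1" "(vv \<theta>)^2 = X2 - b^2"
    unfolding uu_def vv_def b_def[symmetric] using Yb by auto
  have dY: "((\<lambda>\<theta>. (bf \<theta>)^2) has_real_derivative 2 * b * (- c * b / D)) (at \<theta>)"
    unfolding b_def c_def D_def by (auto intro!: derivative_eq_intros bf_deriv simp: algebra_simps)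
  have du: "(uu has_real_derivative (2 * b * (- c * b / D)) / (2 * uu \<theta>)) (at \<theta>)"
  proof -
    have "((\<lambda>\<theta>. (bf \<theta>)^2 - X1) has_real_derivative 2 * b * (- c * b / D) - 0) (at \<theta>)"
      by (rule DERIV_diff[OF dY DERIV_const])
    from sqrt_comp_deriv[OF this] show ?thesis unfolding uu_def[abs_def] using Yb b_def by simp
  qed
  have dv: "(vv has_real_derivative - (2 * b * (- c * b / D)) / (2 * vv \<theta>)) (at \<theta>)"
  proof -
    have "((\<lambda>\<theta>. X2 - (bf \<theta>)^2) has_real_derivative 0 - (2 * b * (- c * b / D))) (at \<theta>)"
      by (rule DERIV_diff[OF DERIV_const dY])
    from sqrt_comp_deriv[OF this] show ?thesis unfolding vv_def[abs_def] using Yb b_def by simp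
  qed
  define E where "E = - (- (2 * b * (- c * b / D)) / (2 * vv \<theta>))
      + beta * ((2 * b * (- c * b / D)) / (2 * uu \<theta>) - (- (2 * b * (- c * b / D)) / (2 * vv \<theta>)))
      + b^2 / D"
  have dPsi: "((\<lambda>\<theta>. Lam \<theta> + Hb k \<theta>) has_real_derivative E) (at \<theta>)"
  proof -
    have "((\<lambda>\<theta>. Lam \<theta> + Hb k \<theta>) has_real_derivative
      (0 - (- (2 * b * (- c * b / D)) / (2 * vv \<theta>)))
      + beta * ((2 * b * (- c * b / D)) / (2 * uu \<theta>) + 0 - (- (2 * b * (- c * b / D)) / (2 * vv \<theta>)))
      + (fst (snd (Sloop k \<theta>)))^2 / Dk k \<theta>) (at \<theta>)"
      unfolding Lam_def[abs_def]
      by (rule derivative_eq_intros du dv Hb_deriv | simp)+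
    then show ?thesis unfolding E_def b_def D_def bf_def by simp
  qed
  have cb: "c * b = uu \<theta> * vv \<theta>"
  proof -
    have "(c * b)^2 = (cm k * sin \<theta>)^2 * (bf \<theta>)^2" unfolding c_def b_def by (simp only: power_mult_distrib)
    also have "\<dots> = (b^2 - X1) * (X2 - b^2)" unfolding key_id X1_def X2_def b_def ..
    also have "\<dots> = (uu \<theta> * vv \<theta>)^2" unfolding power_mult_distrib usq ..
    finally have "(c * b)^2 = (uu \<theta> * vv \<theta>)^2" .
    then show ?thesis using cpos bpos upos by (simp add: power2_eq_iff_nonneg)
  qed
  have cdef: "c = uu \<theta> * vv \<theta> / b" using cb bpos by (simp add: field_simps)
  have Eeq: "E = (b^2 / D) * (1 - (uu \<theta> + beta * (uu \<theta> + vv \<theta>)) / b)"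
    unfolding E_def cdef using bpos Dpos upos by (simp add: field_simps power2_eq_square)
  have key: "uu \<theta> + beta * (uu \<theta> + vv \<theta>) \<ge> b"
  proof -
    have "(uu \<theta> + vv \<theta>)^2 \<ge> (uu \<theta>)^2 + (vv \<theta>)^2" using upos by (simp add: power2_sum)
    also have "(uu \<theta>)^2 + (vv \<theta>)^2 = sD^2" unfolding usq sD_def using Delta_pos by simp
    finally have "uu \<theta> + vv \<theta> \<ge> sD" using upos sD_pos by (simp add: power2_le_iff_abs_le)
    then have "beta * (uu \<theta> + vv \<theta>) \<ge> beta * sD" using beta_pos by simp
    also have "beta * sD = bmin" unfolding beta_def using sD_pos by simp
    finally have 1: "beta * (uu \<theta> + vv \<theta>) \<ge> bmin" .
    have "(uu \<theta> + bmin)^2 \<ge> (uu \<theta>)^2 + bmin^2" using upos bmin_pos by (simp add: power2_sum)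
    also have "(uu \<theta>)^2 + bmin^2 = b^2" unfolding usq X1_def by simp
    finally have "uu \<theta> + bmin \<ge> b" using upos bmin_pos bpos by (simp add: power2_le_iff_abs_le)
    then show ?thesis using 1 by linarith
  qed
  have "E \<le> 0"
  proof -
    have "(uu \<theta> + beta * (uu \<theta> + vv \<theta>)) / b \<ge> 1" using key bpos by simp
    then show ?thesis unfolding Eeq using bpos Dpos by (intro mult_nonneg_nonpos) auto
  qed
  then show ?thesis using dPsi by blast
qed

lemma Psi_cont: "continuous_on UNIV (\<lambda>\<theta>. Lam \<theta> + Hb k \<theta>)"
  unfolding Lam_def[abs_def] uu_def[abs_def] vv_def[abs_def]
  using bf_cont Hb_cont by (intro continuous_intros) auto

lemma Hb_est:
  assumes "0 < \<theta>0" "\<theta>0 < pi"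
  shows "Hb k pi - Hb k \<theta>0 \<le> Lam \<theta>0"
proof -
  obtain l z where lz: "\<theta>0 < z" "z < pi" "((\<lambda>\<theta>. Lam \<theta> + Hb k \<theta>) has_real_derivative l) (at z)"
    "(Lam pi + Hb k pi) - (Lam \<theta>0 + Hb k \<theta>0) = (pi - \<theta>0) * l"
    using MVT[OF assms(2), of "\<lambda>\<theta>. Lam \<theta> + Hb k \<theta>"] Psi_cont Psi_deriv assms
    by (metis (no_types, lifting) continuous_on_subset subset_UNIV real_differentiable_def
        less_trans)
  obtain l' where l': "((\<lambda>\<theta>. Lam \<theta> + Hb k \<theta>) has_real_derivative l') (at z)" "l' \<le> 0"
    using Psi_deriv[of z] lz assms by auto
  have "l = l'" using DERIV_unique[OF lz(3) l'(1)] .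
  then have "(pi - \<theta>0) * l \<le> 0" using l'(2) assms by (simp add: mult_nonneg_nonpos)
  then show ?thesis using lz(4) Lam_pi by simp
qed

end


context kpar
begin

lemma Lam_bound:
  assumes kq: "k \<le> 1/4" and th: "0 < \<theta>0" "\<theta>0 < pi"
  shows "Lam \<theta>0 \<le> (1 + 16*k) * bf \<theta>0"
proof -
  define b where "b = bf \<theta>0"
  define u where "u = uu \<theta>0"
  define v where "v = vv \<theta>0"
  define r where "r = 1 / sD"
  note Yb = Y_bounds[OF th, folded b_def]
  have bpos: "b > 0" unfolding b_def by (rule bf_pos)
  have X1nn: "X1 \<ge> 0" unfolding X1_def by simp
  have X2le: "X2 \<le> 1" using bminmax2 unfolding X2_def by (smt (verit) zero_le_power2)
  have ble: "b \<le> 1"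
  proof -
    have "b^2 \<le> 1^2" using Yb X2le by simp
    then show ?thesis using power2_le_imp_le[of b 1] by simp
  qed
  have usq: "u^2 = b^2 - X1" using Y_bounds[OF th] unfolding u_def uu_def b_def by simp
  have vsq: "v^2 = X2 - b^2" using Y_bounds[OF th] unfolding v_def vv_def b_def by simp
  have unn: "u \<ge> 0" "v \<ge> 0" using Y_bounds[OF th] unfolding u_def v_def uu_def vv_def by auto
  have sDsq: "sD^2 = X2 - X1" unfolding sD_def using Delta_pos by simp
  have vlt: "v < sD"
  proof -
    have "v^2 < sD^2" unfolding vsq sDsq using Yb by simp
    then show ?thesis using sD_pos power_less_imp_less_base[of v 2 sD] by simp
  qed
  have ule: "u \<le> b"
  proof -
    have "u^2 \<le> b^2" unfolding usq using X1nn by simp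
    then show ?thesis using bpos power2_le_imp_le[of u b] by simp
  qed
  have t1: "sD - v \<le> b * r"
  proof -
    have "(sD - v) * (sD + v) = b^2 - X1" using sDsq vsq by (simp add: algebra_simps power2_eq_square)
    also have "\<dots> \<le> b" using X1nn ble bpos by (smt (verit) mult_left_le power2_eq_square)
    finally have "(sD - v) * (sD + v) \<le> b" .
    moreover have "(sD - v) * sD \<le> (sD - v) * (sD + v)" using vlt unn by (intro mult_left_mono) auto
    ultimately have "(sD - v) * sD \<le> b" by linarith
    then show ?thesis unfolding r_def using sD_pos by (simp add: field_simps)
  qed
  have Dl: "X2 - X1 \<ge> 1 - 2*k"
  proof -
    have "cm k \<ge> 1 - 2*k"
    proof -
      have "(1 - 2*k) = sqrt ((1 - 2*k)^2)" using k1 by simp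
      also have "\<dots> \<le> sqrt (1 - 2*k)" using k0 k1 by (intro real_sqrt_le_mono) (simp add: power2_eq_square mult_le_cancel_right1)
      finally show ?thesis by (simp add: cm_def)
    qed
    then show ?thesis unfolding Delta_eq using pA_ge1 cm_pos by (smt (verit) mult_le_cancel_left1)
  qed
  have Dle: "X2 - X1 \<le> 1" using X2le X1nn by simp
  have sDge: "sD \<ge> 1 - 2*k"
  proof -
    have "sD \<ge> X2 - X1" unfolding sD_def using Dle Delta_pos
      by (smt (verit) real_sqrt_ge_1_iff real_sqrt_le_mono sqrt_le_D power2_eq_square mult_le_cancel_right1
          real_sqrt_pow2 zero_le_power2)
    then show ?thesis using Dl by simp
  qed
  have rle: "r \<le> 1 + 4*k"
  proof -
    have pos: "1 - 2*k > 0" using kq by simp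
    have "r \<le> 1 / (1 - 2*k)" unfolding r_def using sDge pos sD_pos by (intro divide_left_mono) auto
    also have "\<dots> \<le> 1 + 4*k"
    proof -
      have "1 \<le> (1 + 4*k) * (1 - 2*k)" using kq k0 by (simp add: algebra_simps)
      then show ?thesis using pos by (simp add: divide_le_eq)
    qed
    finally show ?thesis .
  qed
  have rpos: "r > 0" unfolding r_def using sD_pos by simp
  have betar: "beta = bmin * r" unfolding beta_def r_def by simp
  have "Lam \<theta>0 = (sD - v) + beta * (u + (sD - v))" unfolding Lam_def u_def v_def by simp
  also have "\<dots> \<le> b * r + beta * (b + b * r)"
    using t1 ule beta_pos by (intro add_mono mult_left_mono) auto
  also have "\<dots> = b * (r + bmin * r * (1 + r))" unfolding betar by (simp add: algebra_simps)
  also have "\<dots> \<le> b * (1 + 16*k)"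
  proof -
    have "bmin * r \<le> 2*k * (1 + 4*k)" using bmin_le rle bmin_pos rpos by (intro mult_mono) auto
    also have "\<dots> \<le> 2*k * 2" using kq k0 by (intro mult_left_mono) auto
    finally have br: "bmin * r \<le> 4*k" by simp
    have r3: "1 + r \<le> 3" using rle kq by linarith
    have "bmin * r * (1 + r) \<le> 4*k * 3"
      by (rule mult_mono[OF br r3]) (use bmin_pos rpos k0 in auto)
    then have "r + bmin * r * (1 + r) \<le> 1 + 16*k" using rle by linarith
    then show ?thesis using bpos by (intro mult_left_mono) auto
  qed
  finally show ?thesis unfolding b_def by (simp add: mult.commute)
qed

end


context kpar
begin

lemma main:
  assumes pv: "positive_vec V" and dist: "distinguished V"
    and ul: "unit_vec V \<in> loop_level_set k" and se: "sol_exp V = (a, b, d)" and kq: "k \<le> 1/4"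
  shows "0 < b \<and> b \<le> 2 + 32*k"
proof -
  obtain v1 v2 v3 where V: "V = (v1, v2, v3)" by (cases V) auto
  have vpos: "v1 > 0" "v2 > 0" "v3 > 0" using pv unfolding V positive_vec_def by auto
  define s0 where "s0 = norm V"
  have s0: "s0 > 0" unfolding s0_def using vpos V by (auto simp: zero_prod_def)
  define x0 where "x0 = v1 / s0"
  define y0 where "y0 = v2 / s0"
  define z0 where "z0 = v3 / s0"
  have uv: "unit_vec V = (x0, y0, z0)" unfolding unit_vec_def x0_def y0_def z0_def s0_def V
    by simp
  have lv: "x0^2 + y0^2 + z0^2 = 1" "x0 > 0" "y0 > 0" "x0 * y0 = k"
    using ul unfolding uv loop_level_set_def by auto
  have z0: "z0 > 0" unfolding z0_def using vpos s0 by simp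
  obtain \<theta>0 where th: "0 < \<theta>0" "\<theta>0 < pi" "Sloop k \<theta>0 = (x0, y0, z0)"
    using loop_init[OF lv(2,3,4) lv(1) z0] by blast
  have Veq: "V = (s0 * x0, s0 * y0, s0 * z0)" unfolding V x0_def y0_def z0_def using s0 by simp
  obtain l where l: "l \<ge> 1" "small_symmetric_flowline (l *\<^sub>R V)"
    using dist unfolding distinguished_def by blast
  define W where "W = l *\<^sub>R V"
  define w where "w = l * s0"
  have lpos: "l > 0" using l by simp
  have nW: "norm W = w" unfolding W_def w_def s0_def using lpos by simp
  have uW: "unit_vec W = (x0, y0, z0)"
  proof -
    have "unit_vec W = (1 / (l * s0)) *\<^sub>R (l *\<^sub>R V)" unfolding unit_vec_def W_def nW[unfolded W_def] w_def ..
    also have "\<dots> = (1 / s0) *\<^sub>R V" using lpos s0 by simp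
    also have "\<dots> = unit_vec V" unfolding unit_vec_def s0_def ..
    finally show ?thesis unfolding uv .
  qed
  have ssf: "symmetric_flowline W" "\<exists>c. 0 < c \<and> c < 1/2 \<and> unit_vec W \<in> loop_level_set c \<and> norm W < loop_period c"
    using l(2) unfolding small_symmetric_flowline_def W_def by auto
  obtain c' where c': "unit_vec W \<in> loop_level_set c'" "norm W < loop_period c'" using ssf(2) by blast
  have "c' = k" using c'(1) lv(4) unfolding uW loop_level_set_def by simp
  then have wlt: "w < Pk" using c'(2) loop_period_le nW by simp
  have fe: "flow_end W = usol k \<theta>0 w" unfolding flow_end_def nW uW using Sigma_flow_usol[OF th(3)] by simp
  have ue: "usol k \<theta>0 w = (x0, y0, -z0)"
    using ssf(1) unfolding symmetric_flowline_def flow_start_def uW fe[symmetric]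
    by (cases "flow_end W") auto
  define \<psi> where "\<psi> = Gk k (w + Fk k \<theta>0)"
  have Sp: "Sloop k \<psi> = (x0, y0, -z0)" using ue unfolding usol_def \<psi>_def .
  obtain n :: int where n: "\<psi> = -\<theta>0 + 2 * pi * n" using Sloop_sym[OF th(3) Sp] by blast
  have wpos: "w > 0" unfolding w_def using lpos s0 by simp
  have p1: "\<theta>0 < \<psi>" unfolding \<psi>_def using Gk_mono(1)[of "Fk k \<theta>0" "w + Fk k \<theta>0"] wpos Gk_Fk by simp
  have p2: "\<psi> < \<theta>0 + 2*pi"
  proof -
    have "w + Fk k \<theta>0 < Fk k (\<theta>0 + 2*pi)" using wlt Fk_shift2pi by simp
    then have "Gk k (w + Fk k \<theta>0) < Gk k (Fk k (\<theta>0 + 2*pi))" using Gk_mono(1) by blast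
    then show ?thesis unfolding \<psi>_def Gk_Fk .
  qed
  have "n = 1"
  proof -
    have "0 < pi * real_of_int n" using p1 n th(1) by linarith
    then have "0 < real_of_int n" by (simp add: zero_less_mult_iff)
    moreover have "pi * real_of_int n < pi * 2" using p2 n th(2) by linarith
    then have "real_of_int n < 2" by simp
    ultimately show ?thesis by linarith
  qed
  then have psi: "\<psi> = 2*pi - \<theta>0" using n by simp
  define T1 where "T1 = Gk k (s0 + Fk k \<theta>0)"
  have T1a: "\<theta>0 < T1" unfolding T1_def using Gk_mono(1)[of "Fk k \<theta>0" "s0 + Fk k \<theta>0"] s0 Gk_Fk by simp
  have T1b: "T1 \<le> \<psi>" unfolding T1_def \<psi>_def using Gk_mono(2) l(1) s0 w_def by simp
  have bE: "b = (Hb k T1 - Hb k \<theta>0) / y0"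
    using sol_exp_y[OF s0 lv(2,3) th(3)] se unfolding Veq[symmetric] T1_def by simp
  have bpos: "0 < b" unfolding bE using Hb_strict[OF T1a] lv(3) by simp
  have "Hb k T1 \<le> Hb k \<psi>" using Hb_strict[of T1 \<psi>] T1b by (cases "T1 = \<psi>") auto
  then have "b \<le> (Hb k (2*pi - \<theta>0) - Hb k \<theta>0) / y0" unfolding bE psi using lv(3) by (simp add: divide_right_mono)
  also have "\<dots> = 2 * (Hb k pi - Hb k \<theta>0) / y0" using Hb_reflect[of \<theta>0] by simp
  also have "\<dots> \<le> 2 * Lam \<theta>0 / y0" using Hb_est[OF th(1,2)] lv(3) by (simp add: divide_right_mono)
  also have "\<dots> \<le> 2 * ((1 + 16*k) * bf \<theta>0) / y0" using Lam_bound[OF kq th(1,2)] lv(3) by (simp add: divide_right_mono)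
  also have "bf \<theta>0 = y0" unfolding bf_def th(3) by simp
  also have "2 * ((1 + 16*k) * y0) / y0 = 2 + 32*k" using lv(3) by simp
  finally show ?thesis using bpos by simp
qed

end

theorem theorem6p1:
  shows "\<forall>\<epsilon>>0. \<exists>L\<^sub>0::real. \<forall>(V::vec3) (c::real) (a::real) (b::real) (d::real).
    positive_vec V \<and> distinguished V \<and> 0 < c \<and> c < 1/2 \<and>
    unit_vec V \<in> loop_level_set c \<and> loop_period c > L\<^sub>0 \<and> sol_exp V = (a, b, d)
    \<longrightarrow> 0 < b \<and> b < 2 + \<epsilon>"
proof (intro allI impI)
  fix \<epsilon> :: real
  assume e: "\<epsilon> > 0"
  define \<delta> where "\<delta> = min (1/4) (\<epsilon>/64)"
  have dpos: "\<delta> > 0" unfolding \<delta>_def using e by simp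
  show "\<exists>L\<^sub>0::real. \<forall>(V::vec3) (c::real) (a::real) (b::real) (d::real).
    positive_vec V \<and> distinguished V \<and> 0 < c \<and> c < 1/2 \<and>
    unit_vec V \<in> loop_level_set c \<and> loop_period c > L\<^sub>0 \<and> sol_exp V = (a, b, d)
    \<longrightarrow> 0 < b \<and> b < 2 + \<epsilon>"
  proof (intro exI[of _ "pi / sqrt \<delta>"] allI impI)
    fix V :: vec3 and c a b d :: real
    assume H: "positive_vec V \<and> distinguished V \<and> 0 < c \<and> c < 1/2 \<and>
      unit_vec V \<in> loop_level_set c \<and> loop_period c > pi / sqrt \<delta> \<and> sol_exp V = (a, b, d)"
    interpret kpar c using H by unfold_locales auto
    have lt: "pi / sqrt \<delta> < pi / sqrt c" using H loop_period_le Pk_le by linarith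
    have "sqrt c < sqrt \<delta>"
    proof (rule ccontr)
      assume "\<not> sqrt c < sqrt \<delta>"
      then have "sqrt \<delta> \<le> sqrt c" by simp
      then have "pi / sqrt c \<le> pi / sqrt \<delta>" using dpos by (intro divide_left_mono) auto
      then show False using lt by simp
    qed
    then have cd: "c < \<delta>" by simp
    have "0 < b \<and> b \<le> 2 + 32*c" by (rule main) (use H cd in \<open>auto simp: \<delta>_def\<close>)
    moreover have "32 * c < \<epsilon>" using cd e unfolding \<delta>_def by simp
    ultimately show "0 < b \<and> b < 2 + \<epsilon>" by simp
  qed
qed


end
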